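(* Let $f=h+\overline{g}$ be a sense-preserving harmonic mapping in $\mathbb{D}$, normalized by $h(0)=g(0)=0$, $h'(0)=1$, $g'(0)=0$, with dilatation $\omega=g'/h'$, and let $\varphi=h-g$. If $\varphi$ is a convex mapping (univalent with convex image) and $\alpha$ is a real number with $-x_0<\alpha<\frac{\sqrt{2}}{2}$, where $x_0\approx 0.303$ is the positive solution of $x\pi+2\arcsin(x)=\frac{\pi}{2}$, then $F_\alpha\in SHCC$.
   Context: Define $\varphi_\alpha(z)=\int_0^z\left(\frac{\varphi(\zeta)}{\zeta}\right)^\alpha d\zeta$ (branch equal to $1$ at $0$), and $F_\alpha=H+\overline{G}$ where $H,G$ are analytic in $\mathbb{D}$, $H(0)=G(0)=0$, $H-G=\varphi_\alpha$, $G'/H'=\alpha\omega$. A harmonic mapping $F=H+\overline{G}$ belongs to $SHCC$ (stable harmonic close-to-convex) if $H+\lambda G$ is a close-to-convex analytic function in $\mathbb{D}$ for every $\lambda$ with $|\lambda|=1$. *)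

theory Defs
  imports "HOL-Complex_Analysis.Complex_Analysis"
begin

abbreviation unit_disc :: "complex set" where "unit_disc \<equiv> ball 0 1"

definition convex_mapping :: "(complex \<Rightarrow> complex) \<Rightarrow> bool" where
  "convex_mapping p \<longleftrightarrow> p holomorphic_on unit_disc \<and> inj_on p unit_disc \<and> convex (p ` unit_disc)"

definition close_to_convex :: "(complex \<Rightarrow> complex) \<Rightarrow> bool" where
  "close_to_convex f \<longleftrightarrow> f holomorphic_on unit_disc \<and>
     (\<exists>psi. convex_mapping psi \<and> (\<forall>z\<in>unit_disc. Re (deriv f z / deriv psi z) > 0))"

text \<open>Stable harmonic close-to-convex: F = H + conj G with H + lambda G close-to-convex
  for every unimodular lambda.\<close>
definition SHCC :: "(complex \<Rightarrow> complex) \<Rightarrow> (complex \<Rightarrow> complex) \<Rightarrow> bool" where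
  "SHCC H G \<longleftrightarrow> (\<forall>lam. norm lam = 1 \<longrightarrow> close_to_convex (\<lambda>z. H z + lam * G z))"

definition log_quot_branch :: "(complex \<Rightarrow> complex) \<Rightarrow> (complex \<Rightarrow> complex) \<Rightarrow> bool" where
  "log_quot_branch p L \<longleftrightarrow> L holomorphic_on unit_disc \<and> L 0 = 0 \<and>
     (\<forall>z\<in>unit_disc - {0}. exp (L z) = p z / z)"

text \<open>phi_alpha(z) = integral from 0 to z of (phi(zeta)/zeta)^alpha, branch equal to 1 at 0.\<close>
definition phi_alpha :: "(complex \<Rightarrow> complex) \<Rightarrow> real \<Rightarrow> complex \<Rightarrow> complex" where
  "phi_alpha p a z = contour_integral (linepath 0 z)
      (\<lambda>\<zeta>. exp (of_real a * (SOME L. log_quot_branch p L) \<zeta>))"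

definition x0 :: real where
  "x0 = (THE x. 0 < x \<and> x \<le> 1 \<and> x * pi + 2 * arcsin x = pi / 2)"

end

theory Submission
  imports Defs
begin


lemma RD_Re:
  assumes "(f has_field_derivative D) (at (of_real x))"
  shows "((\<lambda>t. Re (f (of_real t))) has_real_derivative Re D) (at x)"
proof -
  have "((\<lambda>t. f (of_real t)) has_vector_derivative D) (at x)"
    using has_vector_derivative_real_field[OF assms] .
  then have "((\<lambda>t. f (of_real t)) has_derivative (\<lambda>h. h *\<^sub>R D)) (at x)"
    by (simp add: has_vector_derivative_def)
  then have "((\<lambda>t. Re (f (of_real t))) has_derivative (\<lambda>h. Re (h *\<^sub>R D))) (at x)"
    by (rule has_derivative_Re)
  moreover have "(\<lambda>h. Re (h *\<^sub>R D)) = (*) (Re D)"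
    by (auto simp: fun_eq_iff)
  ultimately show ?thesis by (simp add: has_field_derivative_def)
qed

lemma RD_Im:
  assumes "(f has_field_derivative D) (at (of_real x))"
  shows "((\<lambda>t. Im (f (of_real t))) has_real_derivative Im D) (at x)"
proof -
  have "((\<lambda>t. f (of_real t)) has_vector_derivative D) (at x)"
    using has_vector_derivative_real_field[OF assms] .
  then have "((\<lambda>t. f (of_real t)) has_derivative (\<lambda>h. h *\<^sub>R D)) (at x)"
    by (simp add: has_vector_derivative_def)
  then have "((\<lambda>t. Im (f (of_real t))) has_derivative (\<lambda>h. Im (h *\<^sub>R D))) (at x)"
    by (rule has_derivative_Im)
  moreover have "(\<lambda>h. Im (h *\<^sub>R D)) = (*) (Im D)"
    by (auto simp: fun_eq_iff)
  ultimately show ?thesis by (simp add: has_field_derivative_def)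
qed

definition ee :: "real \<Rightarrow> real \<Rightarrow> complex" where
  "ee r \<theta> = of_real r * exp (\<i> * of_real \<theta>)"

lemma norm_ee [simp]: "r \<ge> 0 \<Longrightarrow> norm (ee r \<theta>) = r"
  by (simp add: ee_def norm_mult)

lemma ee_in_ball: "0 \<le> r \<Longrightarrow> r < 1 \<Longrightarrow> ee r \<theta> \<in> ball 0 1"
  by simp

lemma ee_periodic: "ee r (\<theta> + 2 * pi * of_int k) = ee r \<theta>"
proof -
  have "\<i> * of_real (\<theta> + 2 * pi * of_int k) = \<i> * of_real \<theta> + \<i> * (of_int k * (of_real pi * 2))"
    by (simp add: algebra_simps)
  then show ?thesis by (simp add: ee_def)
qed

lemma ee_2pi: "ee r (\<theta> + 2 * pi) = ee r \<theta>"
  using ee_periodic[of r \<theta> 1] by simp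

lemma deriv_A:
  assumes Lam: "\<Lambda> holomorphic_on ball 0 1" and r: "0 \<le> r" "r < 1"
  shows "((\<lambda>t. t + Im (\<Lambda> (ee r t))) has_real_derivative Re (1 + ee r \<theta> * deriv \<Lambda> (ee r \<theta>))) (at \<theta>)"
proof -
  define z where "z = ee r \<theta>"
  have zb: "z \<in> ball 0 1" using r by (simp add: z_def)
  have dL: "(\<Lambda> has_field_derivative deriv \<Lambda> z) (at z)"
    using holomorphic_derivI[OF Lam open_ball zb] .
  have de: "((\<lambda>w. of_real r * exp (\<i> * w)) has_field_derivative of_real r * (exp (\<i> * of_real \<theta>) * \<i>)) (at (of_real \<theta>))"
    by (auto intro!: derivative_eq_intros)
  have "((\<lambda>w. \<Lambda> (of_real r * exp (\<i> * w))) has_field_derivative deriv \<Lambda> z * (of_real r * (exp (\<i> * of_real \<theta>) * \<i>))) (at (of_real \<theta>))"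
    using DERIV_chain2[OF _ de] dL by (simp add: z_def ee_def)
  then have "((\<lambda>w. \<i> * w + \<Lambda> (of_real r * exp (\<i> * w))) has_field_derivative \<i> + deriv \<Lambda> z * (of_real r * (exp (\<i> * of_real \<theta>) * \<i>))) (at (of_real \<theta>))"
    by (auto intro!: derivative_eq_intros)
  from RD_Im[OF this]
  have "((\<lambda>t. t + Im (\<Lambda> (ee r t))) has_real_derivative Im (\<i> + deriv \<Lambda> z * (of_real r * (exp (\<i> * of_real \<theta>) * \<i>)))) (at \<theta>)"
    by (simp add: ee_def)
  moreover have "Im (\<i> + deriv \<Lambda> z * (of_real r * (exp (\<i> * of_real \<theta>) * \<i>))) = Re (1 + z * deriv \<Lambda> z)"
    by (simp add: z_def ee_def algebra_simps)
  ultimately show ?thesis by (simp add: z_def)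
qed

lemma deriv_v:
  assumes psi: "\<psi> holomorphic_on ball 0 1"
    and dpsi: "\<And>z. z \<in> ball 0 1 \<Longrightarrow> deriv \<psi> z = exp (\<Lambda> z)"
    and r: "0 \<le> r" "r < 1"
  shows "((\<lambda>t. Re (N * (\<psi> (ee r t) - C))) has_real_derivative
            Re (N * (\<i> * (ee r \<theta> * exp (\<Lambda> (ee r \<theta>)))))) (at \<theta>)"
proof -
  define z where "z = ee r \<theta>"
  have zb: "z \<in> ball 0 1" using r by (simp add: z_def)
  have dP: "(\<psi> has_field_derivative exp (\<Lambda> z)) (at z)"
    using holomorphic_derivI[OF psi open_ball zb] dpsi[OF zb] by simp
  have de: "((\<lambda>w. of_real r * exp (\<i> * w)) has_field_derivative of_real r * (exp (\<i> * of_real \<theta>) * \<i>)) (at (of_real \<theta>))"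
    by (auto intro!: derivative_eq_intros)
  have "((\<lambda>w. \<psi> (of_real r * exp (\<i> * w))) has_field_derivative exp (\<Lambda> z) * (of_real r * (exp (\<i> * of_real \<theta>) * \<i>))) (at (of_real \<theta>))"
    using DERIV_chain2[OF _ de] dP by (simp add: z_def ee_def)
  then have "((\<lambda>w. N * (\<psi> (of_real r * exp (\<i> * w)) - C)) has_field_derivative N * (exp (\<Lambda> z) * (of_real r * (exp (\<i> * of_real \<theta>) * \<i>)))) (at (of_real \<theta>))"
    by (auto intro!: derivative_eq_intros)
  from RD_Re[OF this] show ?thesis
    by (simp add: ee_def z_def algebra_simps)
qed

lemma polar_n:
  "ee r \<theta> * exp (L) = of_real (r * exp (Re L)) * exp (\<i> * of_real (\<theta> + Im L))"
proof -
  have "L = of_real (Re L) + \<i> * of_real (Im L)" by (simp add: complex_eq_iff)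
  then have "exp L = exp (of_real (Re L)) * exp (\<i> * of_real (Im L))"
    by (metis exp_add)
  then show ?thesis
    by (simp add: ee_def algebra_simps exp_add[symmetric] exp_of_real)
qed

lemma Re_rot: "Re (cnj (of_real a * exp (\<i> * of_real x)) * (\<i> * (of_real b * exp (\<i> * of_real y)))) = - a * b * sin (y - x)"
proof -
  have "cnj (of_real a * exp (\<i> * of_real x)) * (\<i> * (of_real b * exp (\<i> * of_real y)))
        = of_real (a * b) * (\<i> * exp (\<i> * of_real (y - x)))"
    by (simp add: exp_cnj algebra_simps exp_add[symmetric] exp_diff)
  moreover have "Re (of_real (a * b) * (\<i> * exp (\<i> * of_real (y - x)))) = - a * b * sin (y - x)"
    by (simp add: Re_exp Im_exp)
  ultimately show ?thesis by metis
qed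

lemma P0:
  assumes psi: "\<psi> holomorphic_on ball 0 1" and Lam: "\<Lambda> holomorphic_on ball 0 1"
    and dpsi: "\<And>z. z \<in> ball 0 1 \<Longrightarrow> deriv \<psi> z = exp (\<Lambda> z)"
    and pos: "\<And>z. z \<in> ball 0 1 \<Longrightarrow> Re (1 + z * deriv \<Lambda> z) > 0"
    and r: "0 < r" "r < 1"
  shows "Re (cnj (ee r \<theta>0 * exp (\<Lambda> (ee r \<theta>0))) * (\<psi> (ee r \<theta>) - \<psi> (ee r \<theta>0))) \<le> 0"
proof -
  define A where "A t = t + Im (\<Lambda> (ee r t))" for t
  define \<rho> where "\<rho> t = r * exp (Re (\<Lambda> (ee r t)))" for t
  have \<rho>pos: "\<rho> t > 0" for t using r by (simp add: \<rho>_def)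
  have nA: "ee r t * exp (\<Lambda> (ee r t)) = of_real (\<rho> t) * exp (\<i> * of_real (A t))" for t
    using polar_n[of r t "\<Lambda> (ee r t)"] by (simp add: \<rho>_def A_def)
  have dA: "(A has_real_derivative Re (1 + ee r t * deriv \<Lambda> (ee r t))) (at t)" for t
    unfolding A_def using deriv_A[OF Lam, of r t] r by simp
  have dApos: "Re (1 + ee r t * deriv \<Lambda> (ee r t)) > 0" for t
    using pos[of "ee r t"] r by simp
  have Amono: "A x \<le> A y" if "x \<le> y" for x y
    using DERIV_nonneg_imp_nondecreasing[OF that] dA dApos by (meson less_imp_le)
  have Aper: "A (t + 2 * pi) = A t + 2 * pi" for t
    by (simp add: A_def ee_2pi)
  have Acont: "continuous_on S A" for S
    using dA by (meson DERIV_isCont continuous_at_imp_continuous_on)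
  define N where "N = cnj (ee r \<theta>0 * exp (\<Lambda> (ee r \<theta>0)))"
  define v where "v t = Re (N * (\<psi> (ee r t) - \<psi> (ee r \<theta>0)))" for t
  have dv: "(v has_real_derivative - \<rho> \<theta>0 * \<rho> t * sin (A t - A \<theta>0)) (at t)" for t
  proof -
    have "(v has_real_derivative Re (N * (\<i> * (ee r t * exp (\<Lambda> (ee r t)))))) (at t)"
      unfolding v_def using deriv_v[OF psi dpsi, of r N "\<psi> (ee r \<theta>0)" t] r by simp
    moreover have "Re (N * (\<i> * (ee r t * exp (\<Lambda> (ee r t))))) = - \<rho> \<theta>0 * \<rho> t * sin (A t - A \<theta>0)"
      unfolding N_def nA by (rule Re_rot)
    ultimately show ?thesis by simp
  qed
  define k where "k = floor ((\<theta> - \<theta>0) / (2 * pi))"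
  define \<theta>1 where "\<theta>1 = \<theta> - 2 * pi * of_int k"
  have th1: "\<theta>0 \<le> \<theta>1" "\<theta>1 \<le> \<theta>0 + 2 * pi"
  proof -
    have "of_int k \<le> (\<theta> - \<theta>0) / (2 * pi)" "(\<theta> - \<theta>0) / (2 * pi) < of_int k + 1"
      unfolding k_def by linarith+
    then show "\<theta>0 \<le> \<theta>1" "\<theta>1 \<le> \<theta>0 + 2 * pi"
      unfolding \<theta>1_def by (auto simp: field_simps)
  qed
  have "ee r \<theta> = ee r (\<theta>1 + 2 * pi * of_int k)"
    by (simp add: \<theta>1_def)
  also have "\<dots> = ee r \<theta>1" by (rule ee_periodic)
  finally have eth: "ee r \<theta> = ee r \<theta>1" .
  have v0: "v \<theta>0 = 0" by (simp add: v_def)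
  have v2: "v (\<theta>0 + 2 * pi) = 0" by (simp add: v_def ee_2pi)
  obtain \<theta>s where ths: "\<theta>0 \<le> \<theta>s" "\<theta>s \<le> \<theta>0 + 2 * pi" "A \<theta>s = A \<theta>0 + pi"
    using IVT'[of A \<theta>0 "A \<theta>0 + pi" "\<theta>0 + 2 * pi"] Aper[of \<theta>0] Acont by auto
  have "v \<theta>1 \<le> 0"
  proof (cases "\<theta>1 \<le> \<theta>s")
    case True
    have "v \<theta>1 \<le> v \<theta>0"
    proof (rule DERIV_nonpos_imp_nonincreasing[OF th1(1)])
      fix x assume x: "\<theta>0 \<le> x" "x \<le> \<theta>1"
      have "A \<theta>0 \<le> A x" "A x \<le> A \<theta>s" using x True Amono by auto
      then have "sin (A x - A \<theta>0) \<ge> 0" using ths by (intro sin_ge_zero) auto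
      then have "- \<rho> \<theta>0 * \<rho> x * sin (A x - A \<theta>0) \<le> 0"
        using \<rho>pos[of \<theta>0] \<rho>pos[of x] by simp
      then show "\<exists>y. (v has_real_derivative y) (at x) \<and> y \<le> 0" using dv by blast
    qed
    then show ?thesis using v0 by simp
  next
    case False
    have "v \<theta>1 \<le> v (\<theta>0 + 2 * pi)"
    proof (rule DERIV_nonneg_imp_nondecreasing[OF th1(2)])
      fix x assume x: "\<theta>1 \<le> x" "x \<le> \<theta>0 + 2 * pi"
      have "A \<theta>s \<le> A x" "A x \<le> A (\<theta>0 + 2 * pi)" using x False Amono by auto
      then have b: "pi \<le> A x - A \<theta>0" "A x - A \<theta>0 \<le> 2 * pi" using ths Aper[of \<theta>0] by auto
      have "sin (A x - A \<theta>0) \<le> 0"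
      proof (cases "A x - A \<theta>0 = 2 * pi")
        case True then show ?thesis by simp
      next
        case False then show ?thesis using b by (intro sin_le_zero) auto
      qed
      then have "- \<rho> \<theta>0 * \<rho> x * sin (A x - A \<theta>0) \<ge> 0"
        using \<rho>pos[of \<theta>0] \<rho>pos[of x]
        by (simp add: mult_nonneg_nonpos)
      then show "\<exists>y. (v has_real_derivative y) (at x) \<and> y \<ge> 0" using dv by blast
    qed
    then show ?thesis using v2 by simp
  qed
  then show ?thesis by (simp add: v_def N_def eth)
qed

lemma sphere_ee: "0 < r \<Longrightarrow> \<zeta> \<in> sphere 0 r \<Longrightarrow> \<zeta> = ee r (Arg \<zeta>)"
  using Arg_eq[of \<zeta>] by (auto simp: ee_def)

lemma P1:
  assumes psi: "\<psi> holomorphic_on ball 0 1" and Lam: "\<Lambda> holomorphic_on ball 0 1"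
    and dpsi: "\<And>z. z \<in> ball 0 1 \<Longrightarrow> deriv \<psi> z = exp (\<Lambda> z)"
    and pos: "\<And>z. z \<in> ball 0 1 \<Longrightarrow> Re (1 + z * deriv \<Lambda> z) > 0"
    and r: "0 < r" "r < 1" and z: "z \<in> ball 0 r"
  shows "Re (cnj (ee r \<theta>0 * exp (\<Lambda> (ee r \<theta>0))) * (\<psi> (ee r \<theta>0) - \<psi> z)) > 0"
proof -
  define N where "N = cnj (ee r \<theta>0 * exp (\<Lambda> (ee r \<theta>0)))"
  have N0: "N \<noteq> 0" using r by (simp add: N_def ee_def)
  define F where "F \<zeta> = exp (N * (\<psi> \<zeta> - \<psi> (ee r \<theta>0)))" for \<zeta>
  have sub: "ball 0 r \<subseteq> ball 0 1" "cball 0 r \<subseteq> ball 0 1" using r by auto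
  have Fh: "F holomorphic_on ball 0 1"
    unfolding F_def by (intro holomorphic_intros psi)
  have normF: "norm (F \<zeta>) = exp (Re (N * (\<psi> \<zeta> - \<psi> (ee r \<theta>0))))" for \<zeta>
    by (simp add: F_def)
  have le1: "norm (F \<zeta>) \<le> 1" if "\<zeta> \<in> ball 0 r" for \<zeta>
  proof (rule maximum_modulus_frontier[of F "ball 0 r" 1 \<zeta>])
    show "F holomorphic_on interior (ball 0 r)"
      using holomorphic_on_subset[OF Fh sub(1)] by simp
    show "continuous_on (closure (ball 0 r)) F"
      using holomorphic_on_imp_continuous_on[OF holomorphic_on_subset[OF Fh sub(2)]] r by simp
    show "bounded (ball 0 r)" by simp
    show "\<zeta> \<in> ball 0 r" by fact
    fix w :: complex assume "w \<in> frontier (ball 0 r)"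
    then have w: "w \<in> sphere 0 r" using frontier_ball[OF r(1), of 0] by auto
    have "Re (N * (\<psi> (ee r (Arg w)) - \<psi> (ee r \<theta>0))) \<le> 0"
      unfolding N_def by (rule P0[OF psi Lam dpsi pos r])
    then show "norm (F w) \<le> 1" using sphere_ee[OF r(1) w] normF[of w] by simp
  qed
  have le0: "Re (N * (\<psi> z - \<psi> (ee r \<theta>0))) \<le> 0"
    using le1[OF z] normF[of z] by simp
  have "Re (N * (\<psi> z - \<psi> (ee r \<theta>0))) \<noteq> 0"
  proof
    assume eq0: "Re (N * (\<psi> z - \<psi> (ee r \<theta>0))) = 0"
    then have "norm (F z) = 1" using normF[of z] by simp
    then have "F constant_on ball 0 r"
      using maximum_modulus_principle[of F "ball 0 r" "ball 0 r" z] le1 z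
        holomorphic_on_subset[OF Fh sub(1)] by auto
    then obtain c where c: "\<And>w. w \<in> ball 0 r \<Longrightarrow> F w = c"
      by (auto simp: constant_on_def)
    have zb: "z \<in> ball 0 1" using z r(2) by simp
    have dP: "(\<psi> has_field_derivative exp (\<Lambda> z)) (at z)"
      using holomorphic_derivI[OF psi open_ball zb] dpsi[OF zb] by simp
    have dF: "(F has_field_derivative exp (N * (\<psi> z - \<psi> (ee r \<theta>0))) * (N * exp (\<Lambda> z))) (at z)"
      unfolding F_def by (auto intro!: derivative_eq_intros dP)
    have dc: "((\<lambda>w. c) has_field_derivative exp (N * (\<psi> z - \<psi> (ee r \<theta>0))) * (N * exp (\<Lambda> z))) (at z)"
      by (rule has_field_derivative_transform_within_open[OF dF open_ball z]) (use c in auto)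
    have "exp (N * (\<psi> z - \<psi> (ee r \<theta>0))) * (N * exp (\<Lambda> z)) = 0"
      using DERIV_unique[OF dc DERIV_const] .
    then show False using N0 by simp
  qed
  with le0 have "Re (N * (\<psi> z - \<psi> (ee r \<theta>0))) < 0" by simp
  then show ?thesis unfolding N_def by (simp add: algebra_simps)
qed

lemma circlepath_ee: "circlepath 0 r t = ee r (2 * pi * t)"
  by (simp add: circlepath ee_def algebra_simps)

lemma Re_pos_not_nonpos: "Re y > 0 \<Longrightarrow> y \<notin> \<real>\<^sub>\<le>\<^sub>0"
  using complex_nonpos_Reals_iff by auto

lemma P2_wind:
  assumes psi: "\<psi> holomorphic_on ball 0 1" and Lam: "\<Lambda> holomorphic_on ball 0 1"
    and r: "0 < r" "r < 1"
    and c: "\<And>\<theta>. Re (cnj (ee r \<theta> * exp (\<Lambda> (ee r \<theta>))) * (\<psi> (ee r \<theta>) - c)) > 0"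
  shows "winding_number ((\<lambda>w. \<psi> w - c) \<circ> circlepath 0 r) 0 = 1"
proof -
  define n where "n \<theta> = ee r \<theta> * exp (\<Lambda> (ee r \<theta>))" for \<theta>
  have n0: "n \<theta> \<noteq> 0" for \<theta> using r by (simp add: n_def ee_def)
  define y where "y \<theta> = (\<psi> (ee r \<theta>) - c) / n \<theta>" for \<theta>
  have yRe: "Re (y \<theta>) > 0" for \<theta>
  proof -
    have "Re (y \<theta>) = Re (cnj (n \<theta>) * (\<psi> (ee r \<theta>) - c)) / ((Re (n \<theta>))\<^sup>2 + (Im (n \<theta>))\<^sup>2)"
      by (simp add: y_def Re_divide power2_eq_square)
    moreover have "(Re (n \<theta>))\<^sup>2 + (Im (n \<theta>))\<^sup>2 > 0"
      using n0[of \<theta>] by (simp add: complex_eq_iff sum_power2_gt_zero_iff)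
    ultimately show ?thesis using c[of \<theta>] by (simp add: n_def)
  qed
  define p where "p t = of_real (ln r) + \<i> * of_real (2 * pi * t) + \<Lambda> (ee r (2 * pi * t)) + Ln (y (2 * pi * t))" for t
  have expp: "exp (p t) = \<psi> (ee r (2 * pi * t)) - c" for t
  proof -
    have yn: "y (2 * pi * t) \<noteq> 0" using yRe[of "2 * pi * t"] by auto
    have er: "exp (complex_of_real (ln r)) = of_real r"
      using r by (simp only: exp_of_real exp_ln)
    have "exp (p t) = exp (of_real (ln r)) * exp (\<i> * of_real (2 * pi * t)) * exp (\<Lambda> (ee r (2 * pi * t))) * y (2 * pi * t)"
      by (simp only: p_def exp_add exp_Ln[OF yn])
    also have "\<dots> = n (2 * pi * t) * y (2 * pi * t)"
      by (simp only: er n_def ee_def mult.assoc)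
    also have "\<dots> = \<psi> (ee r (2 * pi * t)) - c"
      using n0[of "2 * pi * t"] by (simp add: y_def)
    finally show ?thesis .
  qed
  have eecont: "continuous_on UNIV (\<lambda>t. ee r (2 * pi * t))"
    unfolding ee_def by (intro continuous_intros)
  have eeb: "ee r (2 * pi * t) \<in> ball 0 1" for t using r by simp
  have cL: "continuous_on UNIV (\<lambda>t. \<Lambda> (ee r (2 * pi * t)))"
    by (rule continuous_on_compose2[OF holomorphic_on_imp_continuous_on[OF Lam] eecont]) (use eeb in auto)
  have cP: "continuous_on UNIV (\<lambda>t. \<psi> (ee r (2 * pi * t)))"
    by (rule continuous_on_compose2[OF holomorphic_on_imp_continuous_on[OF psi] eecont]) (use eeb in auto)
  have cy: "continuous_on UNIV (\<lambda>t. y (2 * pi * t))"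
    unfolding y_def
  proof (rule continuous_on_divide)
    show "continuous_on UNIV (\<lambda>t. \<psi> (ee r (2 * pi * t)) - c)"
      by (intro continuous_intros cP)
    show "continuous_on UNIV (\<lambda>t. n (2 * pi * t))"
      unfolding n_def by (intro continuous_intros cL eecont)
    show "\<forall>x\<in>UNIV. n (2 * pi * x) \<noteq> 0" using n0 by simp
  qed
  have cLn: "continuous_on UNIV (\<lambda>t. Ln (y (2 * pi * t)))"
    by (intro continuous_on_Ln' cy Re_pos_not_nonpos yRe)
  have "continuous_on UNIV p"
    unfolding p_def by (intro continuous_intros cL cLn)
  then have "path p"
    unfolding path_def by (rule continuous_on_subset) simp
  then have "winding_number (exp \<circ> p) 0 = (pathfinish p - pathstart p) / (2 * of_real pi * \<i>)"
    by (rule winding_number_compose_exp)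
  also have "pathfinish p - pathstart p = 2 * of_real pi * \<i>"
  proof -
    have e2: "ee r (2 * pi) = ee r 0" using ee_2pi[of r 0] by simp
    have y2: "y (2 * pi) = y 0" by (simp add: y_def n_def e2)
    have "pathfinish p = p 1" "pathstart p = p 0" by (simp_all add: pathfinish_def pathstart_def)
    moreover have "p 1 - p 0 = \<i> * of_real (2 * pi)"
      unfolding p_def using e2 y2 by simp
    ultimately show ?thesis by simp
  qed
  finally have w1: "winding_number (exp \<circ> p) 0 = 1" by (simp add: comp_def)
  have "winding_number (exp \<circ> p) 0 = winding_number ((\<lambda>w. \<psi> w - c) \<circ> circlepath 0 r) 0"
    by (rule winding_number_cong) (simp add: expp circlepath_ee)
  with w1 show ?thesis by simp
qed


lemma not_constant_psi:
  assumes psi: "\<psi> holomorphic_on ball 0 1"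
    and dpsi: "\<And>z. z \<in> ball 0 1 \<Longrightarrow> deriv \<psi> z = exp (\<Lambda> z)"
  shows "\<not> (\<lambda>w. \<psi> w - c) constant_on ball 0 1"
proof
  assume "(\<lambda>w. \<psi> w - c) constant_on ball 0 1"
  then obtain k where k: "\<And>w. w \<in> ball 0 1 \<Longrightarrow> \<psi> w - c = k"
    by (auto simp: constant_on_def)
  have z0: "(0::complex) \<in> ball 0 1" by simp
  have dP: "((\<lambda>w. \<psi> w - c) has_field_derivative exp (\<Lambda> 0)) (at 0)"
    using holomorphic_derivI[OF psi open_ball z0] dpsi[OF z0] by (auto intro!: derivative_eq_intros)
  have "((\<lambda>w. k) has_field_derivative exp (\<Lambda> 0)) (at 0)"
    by (rule has_field_derivative_transform_within_open[OF dP open_ball z0]) (use k in auto)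
  then have "exp (\<Lambda> 0) = 0" using DERIV_unique DERIV_const by blast
  then show False by simp
qed

lemma P2:
  assumes psi: "\<psi> holomorphic_on ball 0 1" and Lam: "\<Lambda> holomorphic_on ball 0 1"
    and dpsi: "\<And>z. z \<in> ball 0 1 \<Longrightarrow> deriv \<psi> z = exp (\<Lambda> z)"
    and r: "0 < r" "r < 1"
    and c: "\<And>\<theta>. Re (cnj (ee r \<theta> * exp (\<Lambda> (ee r \<theta>))) * (\<psi> (ee r \<theta>) - c)) > 0"
  shows "\<exists>!z. z \<in> ball 0 r \<and> \<psi> z = c"
proof -
  define f where "f w = \<psi> w - c" for w
  have fh: "f holomorphic_on ball 0 1" unfolding f_def by (intro holomorphic_intros psi)
  have fsph: "f w \<noteq> 0" if "w \<in> sphere 0 r" for w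
  proof
    assume "f w = 0"
    then have "\<psi> (ee r (Arg w)) - c = 0" using sphere_ee[OF r(1) that] by (simp add: f_def)
    then show False using c[of "Arg w"] by simp
  qed
  define \<rho> where "\<rho> = (1 + r) / 2"
  have \<rho>: "r < \<rho>" "\<rho> < 1" using r by (auto simp: \<rho>_def)
  define S where "S = ball (0::complex) \<rho>"
  have SB: "S \<subseteq> ball 0 1" using \<rho> by (auto simp: S_def)
  define pz where "pz = {w \<in> S. f w = 0 \<or> w \<in> {}}"
  have fin: "finite pz"
  proof -
    have nc: "\<not> f constant_on ball 0 1"
      unfolding f_def by (rule not_constant_psi[OF psi dpsi])
    have "cball 0 \<rho> \<subseteq> ball (0::complex) 1" using \<rho> by auto
    then have "finite {z \<in> cball 0 \<rho>. f z = 0}"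
      using holomorphic_compact_finite_zeros[OF fh open_ball connected_ball compact_cball _ nc] by blast
    moreover have "pz \<subseteq> {z \<in> cball 0 \<rho>. f z = 0}" by (auto simp: pz_def S_def)
    ultimately show ?thesis by (rule finite_subset[rotated])
  qed
  have pimg: "path_image (circlepath 0 r) = sphere 0 r" using r by simp
  have AP: "contour_integral (circlepath 0 r) (\<lambda>x. deriv f x * 1 / f x) =
      2 * pi * \<i> * (\<Sum>p\<in>pz. winding_number (circlepath 0 r) p * 1 * of_int (zorder f p))"
    unfolding pz_def
  proof (rule argument_principle)
    show "open S" "connected S" by (auto simp: S_def)
    show "f holomorphic_on S - {}" using holomorphic_on_subset[OF fh SB] by simp
    show "(\<lambda>_. 1) holomorphic_on S" by simp
    show "valid_path (circlepath 0 r)" by simp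
    show "pathfinish (circlepath 0 r) = pathstart (circlepath 0 r)" by simp
    show "path_image (circlepath 0 r) \<subseteq> S - {w \<in> S. f w = 0 \<or> w \<in> {}}"
      using pimg fsph \<rho> by (auto simp: S_def)
    show "\<forall>z. z \<notin> S \<longrightarrow> winding_number (circlepath 0 r) z = 0"
    proof (intro allI impI)
      fix z assume "z \<notin> S"
      then have "z \<notin> cball 0 r" using \<rho> by (auto simp: S_def)
      then show "winding_number (circlepath 0 r) z = 0"
        by (intro winding_number_zero_outside[of _ "cball 0 r"]) (use r in auto)
    qed
    show "finite {w \<in> S. f w = 0 \<or> w \<in> {}}" using fin by (simp add: pz_def)
    show "\<forall>p\<in>S \<inter> {}. is_pole f p" by simp
  qed
  have wind: "winding_number (f \<circ> circlepath 0 r) 0 = 1"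
    unfolding f_def by (rule P2_wind[OF psi Lam r c])
  have fcirc0: "0 \<notin> path_image (f \<circ> circlepath 0 r)"
    using fsph pimg by (auto simp: path_image_compose)
  have vp: "valid_path (f \<circ> circlepath 0 r)"
    by (rule valid_path_compose_holomorphic[OF _ fh open_ball]) (use pimg r in auto)
  have fan: "f analytic_on ball 0 1" using fh by (simp add: analytic_on_open)
  have "winding_number (f \<circ> circlepath 0 r) 0 = 1 / (2 * pi * \<i>) * contour_integral (f \<circ> circlepath 0 r) (\<lambda>w. 1 / (w - 0))"
    by (rule winding_number_valid_path[OF vp fcirc0])
  also have "contour_integral (f \<circ> circlepath 0 r) (\<lambda>w. 1 / (w - 0)) = contour_integral (circlepath 0 r) (\<lambda>w. deriv f w * (1 / (f w - 0)))"
    by (rule contour_integral_comp_analyticW[OF fan]) (use pimg r in auto)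
  also have "\<dots> = contour_integral (circlepath 0 r) (\<lambda>x. deriv f x * 1 / f x)" by simp
  finally have W: "winding_number (f \<circ> circlepath 0 r) 0 = 1 / (2 * pi * \<i>) * contour_integral (circlepath 0 r) (\<lambda>x. deriv f x * 1 / f x)" .
  have cancel: "1 / (2 * pi * \<i>) * (2 * pi * \<i> * X) = X" for X :: complex
    by (simp add: field_simps)
  have "(\<Sum>p\<in>pz. winding_number (circlepath 0 r) p * 1 * of_int (zorder f p)) = 1"
    using W wind unfolding AP cancel by simp
  define Z where "Z = {p \<in> pz. norm p < r}"
  have pzr: "norm p \<noteq> r" if "p \<in> pz" for p using that fsph by (auto simp: pz_def)
  have "(\<Sum>p\<in>pz. winding_number (circlepath 0 r) p * 1 * of_int (zorder f p)) = (\<Sum>p\<in>Z. of_int (zorder f p))"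
  proof -
    have "(\<Sum>p\<in>pz. winding_number (circlepath 0 r) p * 1 * of_int (zorder f p)) = (\<Sum>p\<in>pz. if norm p < r then of_int (zorder f p) else 0)"
    proof (rule sum.cong[OF refl])
      fix p assume p: "p \<in> pz"
      show "winding_number (circlepath 0 r) p * 1 * of_int (zorder f p) = (if norm p < r then of_int (zorder f p) else 0)"
      proof (cases "norm p < r")
        case True then show ?thesis using winding_number_circlepath[of p 0 r] by simp
      next
        case False
        then have "p \<notin> cball 0 r" using pzr[OF p] by auto
        then have "winding_number (circlepath 0 r) p = 0"
          by (intro winding_number_zero_outside[of _ "cball 0 r"]) (use r in auto)
        then show ?thesis using False by simp
      qed
    qed
    also have "\<dots> = (\<Sum>p\<in>Z. of_int (zorder f p))"
      unfolding Z_def using fin by (simp add: sum.inter_filter)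
    finally show ?thesis .
  qed
  then have sumZ: "(\<Sum>p\<in>Z. zorder f p) = 1"
    using \<open>(\<Sum>p\<in>pz. _) = 1\<close> by (metis of_int_eq_1_iff of_int_sum)
  have finZ: "finite Z" using fin by (simp add: Z_def)
  have rS: "ball 0 r \<subseteq> S" using \<rho> by (auto simp: S_def)
  have Zeq: "Z = {z \<in> ball 0 r. \<psi> z = c}"
  proof (intro set_eqI iffI)
    fix z assume "z \<in> Z" then show "z \<in> {z \<in> ball 0 r. \<psi> z = c}"
      by (simp add: Z_def pz_def f_def)
  next
    fix z assume "z \<in> {z \<in> ball 0 r. \<psi> z = c}"
    then show "z \<in> Z" using rS by (auto simp: Z_def pz_def f_def)
  qed
  have zpos: "zorder f p \<ge> 1" if pZ: "p \<in> Z" for p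
  proof -
    have "p \<in> pz" using pZ by (simp add: Z_def)
    then have pS: "p \<in> S" and fp: "f p = 0" by (simp_all add: pz_def)
    have pB: "p \<in> ball 0 1" using pS SB by blast
    have rB: "ee r 0 \<in> ball 0 1" using r by simp
    have "ee r 0 \<in> sphere 0 r" using r by simp
    then have fr: "f (ee r 0) \<noteq> 0" by (rule fsph)
    obtain e where e: "0 < e" "ball p e \<subseteq> ball 0 1" "\<And>z. z \<in> ball p e - {p} \<Longrightarrow> f z \<noteq> 0"
      by (rule isolated_zeros[OF fh open_ball connected_ball pB fp rB fr], blast)
    have "\<forall>x. x \<noteq> p \<and> dist x p < e \<longrightarrow> f x \<noteq> 0"
    proof (intro allI impI)
      fix x assume "x \<noteq> p \<and> dist x p < e"
      then have "x \<in> ball p e - {p}" by (simp add: dist_commute)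
      then show "f x \<noteq> 0" by (rule e(3))
    qed
    then have "eventually (\<lambda>z. f z \<noteq> 0) (at p)"
      unfolding eventually_at using e(1) by blast
    then have "frequently (\<lambda>z. f z \<noteq> 0) (at p)"
      by (simp add: eventually_frequently)
    then have "zorder f p > 0" using zorder_pos_iff[OF fh open_ball pB] fp by simp
    then show ?thesis by simp
  qed
  have "int (card Z) * 1 \<le> (\<Sum>p\<in>Z. zorder f p)"
    by (rule sum_bounded_below) (use zpos in auto)
  then have c1: "card Z \<le> 1" using sumZ by simp
  have "Z \<noteq> {}" using sumZ by auto
  then have "card Z = 1" using c1 finZ by (simp add: Suc_leI le_antisym card_gt_0_iff)
  then obtain z0 where z0: "Z = {z0}" by (rule card_1_singletonE)
  then have "{z \<in> ball 0 r. \<psi> z = c} = {z0}" using Zeq by simp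
  then show ?thesis by (metis (mono_tags, lifting) mem_Collect_eq singletonD singletonI)
qed

lemma convex_criterion:
  assumes psi: "\<psi> holomorphic_on ball 0 1" and Lam: "\<Lambda> holomorphic_on ball 0 1"
    and dpsi: "\<And>z. z \<in> ball 0 1 \<Longrightarrow> deriv \<psi> z = exp (\<Lambda> z)"
    and pos: "\<And>z. z \<in> ball 0 1 \<Longrightarrow> Re (1 + z * deriv \<Lambda> z) > 0"
  shows "convex_mapping \<psi>"
proof -
  define Sr where "Sr r = {c. \<forall>\<theta>. Re (cnj (ee r \<theta> * exp (\<Lambda> (ee r \<theta>))) * (\<psi> (ee r \<theta>) - c)) > 0}" for r
  have img: "\<psi> ` ball 0 r = Sr r" if r: "0 < r" "r < 1" for r
  proof
    show "\<psi> ` ball 0 r \<subseteq> Sr r"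
    proof
      fix c assume "c \<in> \<psi> ` ball 0 r"
      then obtain z where z: "z \<in> ball 0 r" "c = \<psi> z" by blast
      have "\<forall>\<theta>. Re (cnj (ee r \<theta> * exp (\<Lambda> (ee r \<theta>))) * (\<psi> (ee r \<theta>) - \<psi> z)) > 0"
        using P1[OF psi Lam dpsi pos r z(1)] by blast
      then show "c \<in> Sr r" unfolding Sr_def z(2) by blast
    qed
    show "Sr r \<subseteq> \<psi> ` ball 0 r"
    proof
      fix c assume "c \<in> Sr r"
      then have cc: "\<And>\<theta>. Re (cnj (ee r \<theta> * exp (\<Lambda> (ee r \<theta>))) * (\<psi> (ee r \<theta>) - c)) > 0"
        unfolding Sr_def by blast
      obtain z where z: "z \<in> ball 0 r" "\<psi> z = c"
        using P2[OF psi Lam dpsi r cc] by blast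
      show "c \<in> \<psi> ` ball 0 r"
      proof (rule rev_image_eqI)
        show "z \<in> ball 0 r" by (rule z(1))
        show "c = \<psi> z" using z(2) by simp
      qed
    qed
  qed
  have injr: "z1 = z2" if r: "0 < r" "r < 1" and z: "z1 \<in> ball 0 r" "z2 \<in> ball 0 r" "\<psi> z1 = \<psi> z2" for r z1 z2
  proof -
    have "\<psi> z1 \<in> Sr r" using img[OF r] z(1) by blast
    then have cc: "\<And>\<theta>. Re (cnj (ee r \<theta> * exp (\<Lambda> (ee r \<theta>))) * (\<psi> (ee r \<theta>) - \<psi> z1)) > 0"
      unfolding Sr_def by blast
    have "\<exists>!z. z \<in> ball 0 r \<and> \<psi> z = \<psi> z1" by (rule P2[OF psi Lam dpsi r cc])
    then obtain w where w: "\<And>y. y \<in> ball 0 r \<and> \<psi> y = \<psi> z1 \<Longrightarrow> y = w"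
      by (elim ex1E) blast
    have "z1 = w" using w[of z1] z by simp
    moreover have "z2 = w" using w[of z2] z by simp
    ultimately show ?thesis by simp
  qed
  have convr: "convex (Sr r)" for r
    unfolding convex_def
  proof (intro ballI allI impI)
    fix x y and u v :: real assume x: "x \<in> Sr r" and y: "y \<in> Sr r" and uv: "0 \<le> u" "0 \<le> v" "u + v = 1"
    show "u *\<^sub>R x + v *\<^sub>R y \<in> Sr r"
      unfolding Sr_def
    proof (intro CollectI allI)
      fix \<theta>
      define N where "N = cnj (ee r \<theta> * exp (\<Lambda> (ee r \<theta>)))"
      define a where "a = \<psi> (ee r \<theta>)"
      have A: "Re (N * (a - x)) > 0" using x by (simp add: Sr_def N_def a_def)
      have B: "Re (N * (a - y)) > 0" using y by (simp add: Sr_def N_def a_def)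
      have uv1: "of_real u + of_real v = (1::complex)" using uv(3) by (metis of_real_1 of_real_add)
      have "N * (a - (u *\<^sub>R x + v *\<^sub>R y)) = N * ((of_real u + of_real v) * a - (of_real u * x + of_real v * y))"
        by (simp add: scaleR_conv_of_real uv1)
      also have "\<dots> = of_real u * (N * (a - x)) + of_real v * (N * (a - y))"
        by (simp add: algebra_simps)
      finally have "N * (a - (u *\<^sub>R x + v *\<^sub>R y)) = of_real u * (N * (a - x)) + of_real v * (N * (a - y))" .
      then have "Re (N * (a - (u *\<^sub>R x + v *\<^sub>R y))) = u * Re (N * (a - x)) + v * Re (N * (a - y))"
        by simp
      moreover have "u * Re (N * (a - x)) + v * Re (N * (a - y)) > 0"
      proof (cases "u = 0")
        case True then show ?thesis using uv B by simp
      next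
        case False then have "u > 0" using uv by simp
        then show ?thesis using A B uv by (simp add: add_pos_nonneg)
      qed
      ultimately show "Re (N * (a - (u *\<^sub>R x + v *\<^sub>R y))) > 0" by simp
    qed
  qed
  have inj: "inj_on \<psi> (ball 0 1)"
  proof (rule inj_onI)
    fix z1 z2 assume z: "z1 \<in> ball (0::complex) 1" "z2 \<in> ball (0::complex) 1" "\<psi> z1 = \<psi> z2"
    define r where "r = (max (norm z1) (norm z2) + 1) / 2"
    have n1: "norm z1 < 1" "norm z2 < 1" using z by auto
    have m1: "0 \<le> max (norm z1) (norm z2)" by (simp add: le_max_iff_disj)
    have m2: "max (norm z1) (norm z2) < 1" using n1 by simp
    have m3: "norm z1 \<le> max (norm z1) (norm z2)" "norm z2 \<le> max (norm z1) (norm z2)" by simp_all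
    have r1: "0 < r" unfolding r_def using m1 by (simp add: field_simps)
    have r2: "r < 1" unfolding r_def using m2 by (simp add: field_simps)
    note r = r1 r2
    have "norm z1 < r" unfolding r_def using n1 by (auto simp: max_def field_simps)
    moreover have "norm z2 < r" unfolding r_def using n1 by (auto simp: max_def field_simps)
    ultimately have "norm z1 < r" "norm z2 < r" by simp_all
    then have "z1 \<in> ball 0 r" "z2 \<in> ball 0 r" by simp_all
    then show "z1 = z2" using injr[OF r] z by blast
  qed
  have conv: "convex (\<psi> ` ball 0 1)"
    unfolding convex_def
  proof (intro ballI allI impI)
    fix x y and u v :: real assume x: "x \<in> \<psi> ` ball 0 1" and y: "y \<in> \<psi> ` ball 0 1" and uv: "0 \<le> u" "0 \<le> v" "u + v = 1"
    obtain z1 z2 where z: "z1 \<in> ball 0 1" "z2 \<in> ball 0 1" "x = \<psi> z1" "y = \<psi> z2" using x y by blast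
    define r where "r = (max (norm z1) (norm z2) + 1) / 2"
    have n1: "norm z1 < 1" "norm z2 < 1" using z by auto
    have m1: "0 \<le> max (norm z1) (norm z2)" by (simp add: le_max_iff_disj)
    have m2: "max (norm z1) (norm z2) < 1" using n1 by simp
    have m3: "norm z1 \<le> max (norm z1) (norm z2)" "norm z2 \<le> max (norm z1) (norm z2)" by simp_all
    have r1: "0 < r" unfolding r_def using m1 by (simp add: field_simps)
    have r2: "r < 1" unfolding r_def using m2 by (simp add: field_simps)
    note r = r1 r2
    have "norm z1 < r" unfolding r_def using n1 by (auto simp: max_def field_simps)
    moreover have "norm z2 < r" unfolding r_def using n1 by (auto simp: max_def field_simps)
    ultimately have "norm z1 < r" "norm z2 < r" by simp_all
    then have "z1 \<in> ball 0 r" "z2 \<in> ball 0 r" by simp_all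
    then have "x \<in> \<psi> ` ball 0 r" "y \<in> \<psi> ` ball 0 r" using z by simp_all
    then have "x \<in> Sr r" "y \<in> Sr r" using img[OF r] by simp_all
    then have "u *\<^sub>R x + v *\<^sub>R y \<in> Sr r" using convr[of r] uv unfolding convex_def by blast
    then have "u *\<^sub>R x + v *\<^sub>R y \<in> \<psi> ` ball 0 r" using img[OF r] by simp
    moreover have "ball 0 r \<subseteq> ball (0::complex) 1" using r by auto
    ultimately show "u *\<^sub>R x + v *\<^sub>R y \<in> \<psi> ` ball 0 1" by blast
  qed
  show ?thesis unfolding convex_mapping_def using psi inj conv by blast
qed




lemma GL:
  fixes f :: "complex \<Rightarrow> complex"
  assumes fd: "(f has_field_derivative D) (at a)" and dpos: "\<delta> > 0"
    and le: "\<And>t. 0 < t \<Longrightarrow> t < \<delta> \<Longrightarrow> Re (c * (f (a + of_real t * b) - f a)) \<le> K * t"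
  shows "Re (c * D * b) \<le> K"
proof -
  define F where "F = (\<lambda>w. f (a + w * b))"
  have d1: "((\<lambda>w. a + w * b) has_field_derivative b) (at 0)"
    by (auto intro!: derivative_eq_intros)
  have "(F has_field_derivative D * b) (at 0)"
    unfolding F_def using DERIV_chain2[OF _ d1] fd by simp
  then have lim: "((\<lambda>h. (F (0 + h) - F 0) / h) \<longlongrightarrow> D * b) (at 0)"
    by (simp add: DERIV_def)
  have fl: "filterlim (\<lambda>t::real. of_real t :: complex) (at 0) (at_right 0)"
  proof (rule filterlim_atI)
    show "((\<lambda>t::real. of_real t :: complex) \<longlongrightarrow> 0) (at_right 0)"
      by (auto intro!: tendsto_eq_intros)
    show "\<forall>\<^sub>F x in at_right 0. (of_real x :: complex) \<noteq> 0"
      using eventually_at_right_less[of 0] by (rule eventually_mono) simp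
  qed
  have lim2: "((\<lambda>t::real. (F (of_real t) - F 0) / of_real t) \<longlongrightarrow> D * b) (at_right 0)"
    using filterlim_compose[OF lim fl] by simp
  have lim3: "((\<lambda>t::real. Re (c * ((F (of_real t) - F 0) / of_real t))) \<longlongrightarrow> Re (c * (D * b))) (at_right 0)"
    by (intro tendsto_intros lim2)
  have ev0: "\<forall>\<^sub>F t in at_right (0::real). 0 < t \<and> t < \<delta>"
    using dpos eventually_at_right_field by blast
  have ev: "\<forall>\<^sub>F t in at_right 0. Re (c * ((F (of_real t) - F 0) / of_real t)) \<le> K"
    using ev0
  proof (rule eventually_mono)
    fix t :: real assume t: "0 < t \<and> t < \<delta>"
    have "c * ((F (of_real t) - F 0) / of_real t) = (c * (F (of_real t) - F 0)) / of_real t"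
      by simp
    then have "Re (c * ((F (of_real t) - F 0) / of_real t)) = Re (c * (F (of_real t) - F 0)) / t"
      by (simp only: Re_divide_of_real)
    also have "\<dots> \<le> K * t / t"
      using le[of t] t by (intro divide_right_mono) (auto simp: F_def)
    finally show "Re (c * ((F (of_real t) - F 0) / of_real t)) \<le> K" using t by simp
  qed
  show ?thesis
    using tendsto_upperbound[OF lim3 ev] by (simp add: mult.assoc)
qed


lemma jack_core:
  fixes w :: "complex \<Rightarrow> complex"
  assumes wh: "w holomorphic_on ball 0 1" and w0: "w 0 = 0" and z1: "z1 \<in> ball 0 1" "norm (w z1) \<ge> 1"
  obtains z0 k where "z0 \<in> ball 0 1" "z0 \<noteq> 0" "norm (w z0) = 1" "k \<ge> 1"
    "z0 * deriv w z0 = of_real k * w z0"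
proof -
  have wc: "continuous_on (ball 0 1) w" using wh by (rule holomorphic_on_imp_continuous_on)
  define K where "K = cball 0 (norm z1) \<inter> (\<lambda>z. norm (w z)) -` {1..}"
  have cb: "cball 0 (norm z1) \<subseteq> ball (0::complex) 1" using z1 by auto
  have "closed K" unfolding K_def
    by (rule continuous_closed_preimage) (auto intro!: continuous_intros continuous_on_subset[OF wc cb])
  moreover have "K \<subseteq> cball 0 (norm z1)" by (auto simp: K_def)
  ultimately have cK: "compact K" by (metis compact_cball compact_Int_closed inf.absorb_iff2)
  have z1K: "z1 \<in> K" using z1 by (auto simp: K_def)
  obtain z0 where z0K: "z0 \<in> K" and z0min: "\<And>y. y \<in> K \<Longrightarrow> norm z0 \<le> norm y"
    using continuous_attains_inf[OF cK _ continuous_on_norm_id[of K]] z1K by blast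
  have z0B: "z0 \<in> ball 0 1" using z0K cb by (auto simp: K_def)
  have wz0: "norm (w z0) \<ge> 1" using z0K by (auto simp: K_def)
  have z0nz: "z0 \<noteq> 0" using wz0 w0 by auto
  define r0 where "r0 = norm z0"
  have r0: "0 < r0" "r0 < 1" using z0nz z0B by (auto simp: r0_def)
  have inner: "norm (w z) < 1" if "norm z < r0" for z
  proof (rule ccontr)
    assume "\<not> norm (w z) < 1"
    then have "z \<in> K" using that z0K by (auto simp: K_def r0_def)
    then show False using z0min[of z] that by (simp add: r0_def)
  qed
  define v where "v \<zeta> = w (of_real r0 * \<zeta>)" for \<zeta>
  have vh: "v holomorphic_on ball 0 1"
  proof -
    have "norm (of_real r0 * \<zeta>) < 1" if "\<zeta> \<in> ball 0 1" for \<zeta> :: complex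
    proof -
      have "norm (of_real r0 * \<zeta>) = r0 * norm \<zeta>" using r0 by (simp add: norm_mult)
      also have "\<dots> \<le> 1 * norm \<zeta>" by (rule mult_right_mono) (use r0 in auto)
      also have "\<dots> < 1" using that by simp
      finally show ?thesis .
    qed
    then have im: "(\<lambda>\<zeta>. of_real r0 * \<zeta>) ` ball 0 1 \<subseteq> ball (0::complex) 1" by auto
    have "(w \<circ> (\<lambda>\<zeta>. of_real r0 * \<zeta>)) holomorphic_on ball 0 1"
      by (rule holomorphic_on_compose_gen[OF _ wh im]) (intro holomorphic_intros)
    moreover have "v = w \<circ> (\<lambda>\<zeta>. of_real r0 * \<zeta>)" by (simp add: v_def fun_eq_iff)
    ultimately show ?thesis by simp
  qed
  have vlt: "norm (v \<zeta>) < 1" if "norm \<zeta> < 1" for \<zeta>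
  proof -
    have "norm (of_real r0 * \<zeta>) < r0" using r0 that by (simp add: norm_mult)
    then show ?thesis unfolding v_def by (rule inner)
  qed
  have schw: "norm (w z) \<le> norm z / r0" if "norm z < r0" for z
  proof -
    have "norm (z / of_real r0) < 1" using that r0 by (simp add: norm_divide)
    moreover have v0: "v 0 = 0" using w0 by (simp add: v_def)
    ultimately have "norm (v (z / of_real r0)) \<le> norm (z / of_real r0)"
      using Schwarz_Lemma(1)[OF vh v0 vlt] by blast
    moreover have "v (z / of_real r0) = w z" using r0 by (simp add: v_def)
    ultimately show ?thesis using r0 by (simp add: norm_divide)
  qed
  have bnd: "norm (w z) \<le> 1" if "norm z = r0" for z
  proof -
    have zB: "z \<in> ball 0 1" using that r0 by simp
    have cw: "isCont w z" using continuous_on_interior[OF wc] zB by simp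
    have c1: "isCont (\<lambda>t::real. of_real t * z) 1" by (intro continuous_intros)
    have c2: "isCont w ((\<lambda>t::real. of_real t * z) 1)" using cw by simp
    have "isCont (\<lambda>t::real. w (of_real t * z)) 1" by (rule isCont_o2[OF c1 c2])
    then have "isCont (\<lambda>t::real. norm (w (of_real t * z))) 1"
      by (rule isCont_norm)
    then have "((\<lambda>t::real. norm (w (of_real t * z))) \<longlongrightarrow> norm (w z)) (at 1)"
      by (simp add: isCont_def)
    then have lim: "((\<lambda>t::real. norm (w (of_real t * z))) \<longlongrightarrow> norm (w z)) (at_left 1)"
      by (rule tendsto_mono[rotated]) (simp add: at_le)
    have ev: "eventually (\<lambda>t::real. norm (w (of_real t * z)) \<le> 1) (at_left 1)"
      unfolding eventually_at_left_field
    proof (intro exI[of _ 0] conjI allI impI)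
      fix t :: real assume t: "0 < t" "t < 1"
      have "norm (of_real t * z) < r0" using t that r0 by (simp add: norm_mult)
      then show "norm (w (of_real t * z)) \<le> 1" using inner less_imp_le by blast
    qed simp
    show ?thesis using tendsto_upperbound[OF lim ev] by simp
  qed
  define a where "a = w z0"
  have na: "norm a = 1" using wz0 bnd[of z0] by (simp add: a_def r0_def)
  have aa: "cnj a * a = 1"
    using complex_norm_square[of a] na by (simp add: mult.commute)
  have dw: "(w has_field_derivative deriv w z0) (at z0)"
    using holomorphic_derivI[OF wh open_ball z0B] .
  have Reb: "Re (cnj a * y) \<le> norm y" for y
    using complex_Re_le_cmod[of "cnj a * y"] na by (simp add: norm_mult)
  have rad: "Re (cnj a * deriv w z0 * (- z0)) \<le> -1"
  proof (rule GL[OF dw, of 1])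
    fix t :: real assume t: "0 < t" "t < 1"
    have eq: "z0 + of_real t * (- z0) = of_real (1 - t) * z0" by (simp add: algebra_simps)
    have n1t: "norm (complex_of_real (1 - t)) = 1 - t" using t by (simp only: norm_of_real)
    have "norm (of_real (1 - t) * z0) = (1 - t) * r0" by (simp only: norm_mult n1t r0_def)
    also have "\<dots> < r0" using t r0 by simp
    finally have lt: "norm (of_real (1 - t) * z0) < r0" .
    have "norm (w (of_real (1 - t) * z0)) \<le> norm (of_real (1 - t) * z0) / r0"
      by (rule schw[OF lt])
    also have "\<dots> = 1 - t" using r0 by (simp only: norm_mult n1t r0_def) simp
    finally have "norm (w (of_real (1 - t) * z0)) \<le> 1 - t" .
    then have "Re (cnj a * w (of_real (1 - t) * z0)) \<le> 1 - t" using Reb order_trans by blast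
    then show "Re (cnj a * (w (z0 + of_real t * (- z0)) - w z0)) \<le> -1 * t"
      unfolding eq using aa by (simp add: a_def[symmetric] algebra_simps)
  qed simp
  define F where "F \<zeta> = w (z0 * exp \<zeta>)" for \<zeta>
  have de: "((\<lambda>\<zeta>. z0 * exp \<zeta>) has_field_derivative z0) (at 0)"
    by (auto intro!: derivative_eq_intros)
  have dF: "(F has_field_derivative deriv w z0 * z0) (at 0)"
    unfolding F_def using DERIV_chain2[OF _ de] dw by simp
  have angb: "Re (cnj a * (F (0 + of_real t * b) - F 0)) \<le> 0 * t" if "b = \<i> \<or> b = - \<i>" for t b
  proof -
    have "norm (z0 * exp (of_real t * b)) = r0"
      using that by (auto simp: norm_mult r0_def)
    then have "norm (F (of_real t * b)) \<le> 1" unfolding F_def by (rule bnd)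
    then have "Re (cnj a * F (of_real t * b)) \<le> 1" using Reb order_trans by blast
    moreover have "F 0 = a" by (simp add: F_def a_def)
    ultimately show ?thesis using aa by (simp add: algebra_simps)
  qed
  have ang1: "Re (cnj a * (deriv w z0 * z0) * \<i>) \<le> 0"
    apply (rule GL[OF dF, of 1])
     apply simp
    apply (rule angb)
    apply simp
    done
  have ang2: "Re (cnj a * (deriv w z0 * z0) * (- \<i>)) \<le> 0"
    apply (rule GL[OF dF, of 1])
     apply simp
    apply (rule angb)
    apply simp
    done
  define X where "X = cnj a * (deriv w z0 * z0)"
  have ImX: "Im X = 0" using ang1 ang2 by (simp add: X_def[symmetric])
  have ReX: "Re X \<ge> 1" using rad by (simp add: X_def algebra_simps)
  have Xr: "X = of_real (Re X)" using ImX by (simp add: complex_eq_iff)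
  have "z0 * deriv w z0 = a * X"
    unfolding X_def using aa by (simp add: algebra_simps)
  also have "\<dots> = of_real (Re X) * w z0" using Xr by (simp add: a_def mult.commute)
  finally show ?thesis using that[OF z0B z0nz] na ReX by (simp add: a_def)
qed

lemma jack_P:
  assumes Ph: "P holomorphic_on ball 0 1" and P0: "P 0 = 1"
    and Pnz: "\<And>z. z \<in> ball 0 1 \<Longrightarrow> P z \<noteq> 0"
    and z1: "z1 \<in> ball 0 1" "Re (P z1) \<le> 1/2"
  obtains z0 k where "z0 \<in> ball 0 1" "z0 \<noteq> 0" "k \<ge> 1" "norm (1 - 1 / P z0) = 1"
    "z0 * deriv P z0 / P z0 = of_real k * (1 - 1 / P z0) * P z0"
proof -
  define w where "w z = 1 - 1 / P z" for z
  have wh: "w holomorphic_on ball 0 1" unfolding w_def using Pnz by (intro holomorphic_intros Ph) auto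
  have w0: "w 0 = 0" by (simp add: w_def P0)
  have "norm (w z1) \<ge> 1"
  proof -
    have Pn: "P z1 \<noteq> 0" using Pnz z1 by auto
    have "(norm (P z1 - 1))^2 - (norm (P z1))^2 = 1 - 2 * Re (P z1)"
      by (simp only: cmod_power2) (simp add: power2_eq_square algebra_simps)
    then have "norm (P z1) ^ 2 \<le> norm (P z1 - 1) ^ 2" using z1(2) by linarith
    then have "norm (P z1) \<le> norm (P z1 - 1)" by (rule power2_le_imp_le) simp
    moreover have "w z1 = (P z1 - 1) / P z1" using Pn by (simp add: w_def field_simps)
    ultimately show ?thesis using Pn by (simp add: norm_divide)
  qed
  then obtain z0 k where z0: "z0 \<in> ball 0 1" "z0 \<noteq> 0" "norm (w z0) = 1" "k \<ge> 1"
    "z0 * deriv w z0 = of_real k * w z0"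
    using jack_core[OF wh w0 z1(1)] by blast
  have Pn: "P z0 \<noteq> 0" using Pnz z0 by auto
  have dP: "(P has_field_derivative deriv P z0) (at z0)" using holomorphic_derivI[OF Ph open_ball z0(1)] .
  have "(w has_field_derivative deriv P z0 / (P z0)^2) (at z0)"
    unfolding w_def using dP Pn by (auto intro!: derivative_eq_intros simp: power2_eq_square field_simps)
  then have dw: "deriv w z0 = deriv P z0 / (P z0)^2" by (rule DERIV_imp_deriv)
  have "z0 * deriv P z0 / P z0 = (z0 * deriv w z0) * P z0"
    using Pn by (simp add: dw power2_eq_square field_simps)
  also have "\<dots> = of_real k * (1 - 1 / P z0) * P z0" using z0(5) by (simp add: w_def)
  finally show ?thesis using that[OF z0(1,2,4)] z0(3) by (simp add: w_def)
qed

lemma circle_Re_half: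
  assumes "norm w = 1" "w \<noteq> 1"
  shows "Re (1 / (1 - w)) = 1/2"
proof -
  have h: "(Re w)^2 + (Im w)^2 = 1" using assms(1) by (simp add: cmod_def)
  have ne: "(1 - Re w)^2 + (Im w)^2 \<noteq> 0"
    using assms(2) by (auto simp: complex_eq_iff)
  have "Re (1 / (1 - w)) = (1 - Re w) / ((1 - Re w)^2 + (Im w)^2)"
    by (simp add: Re_divide power2_eq_square)
  also have "(1 - Re w)^2 + (Im w)^2 = 2 * (1 - Re w)"
    using h by (simp add: power2_eq_square algebra_simps)
  finally show ?thesis using ne h
    by (metis (no_types, lifting) \<open>(1 - Re w)\<^sup>2 + (Im w)\<^sup>2 = 2 * (1 - Re w)\<close> mult_zero_right nonzero_divide_mult_cancel_right times_divide_eq_left divide_self_if one_add_one)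
qed

lemma F1:
  assumes conv: "convex_mapping \<phi>" and phi0: "\<phi> 0 = 0" and z: "z \<in> ball 0 1" and x: "norm x \<le> 1"
  shows "Re (cnj z * (\<phi> (x * z) - \<phi> z) / deriv \<phi> z) \<le> 0"
proof -
  have ph: "\<phi> holomorphic_on ball 0 1" and inj: "inj_on \<phi> (ball 0 1)" and cv: "convex (\<phi> ` ball 0 1)"
    using conv by (auto simp: convex_mapping_def)
  obtain g where gh: "g holomorphic_on \<phi> ` ball 0 1"
    and gd: "\<And>u. u \<in> ball 0 1 \<Longrightarrow> deriv \<phi> u * deriv g (\<phi> u) = 1"
    and gi: "\<And>u. u \<in> ball 0 1 \<Longrightarrow> g (\<phi> u) = u"
    using holomorphic_has_inverse[OF ph open_ball inj] by blast
  have oI: "open (\<phi> ` ball 0 1)" by (rule open_mapping_thm3[OF ph open_ball inj])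
  have xz: "x * z \<in> ball 0 1"
  proof -
    have "norm (x * z) \<le> norm z" using x by (simp add: norm_mult mult_left_le_one_le)
    then show ?thesis using z by simp
  qed
  define a where "a = \<phi> z"
  define b where "b = \<phi> (x * z) - \<phi> z"
  have aI: "a \<in> \<phi> ` ball 0 1" using z by (simp add: a_def)
  have dg: "(g has_field_derivative deriv g a) (at a)" by (rule holomorphic_derivI[OF gh oI aI])
  have dnz: "deriv \<phi> z \<noteq> 0" using gd[OF z] by auto
  have dgv: "deriv g a = 1 / deriv \<phi> z" using gd[OF z] dnz by (simp add: a_def field_simps)
  have main: "Re (cnj z * deriv g a * b) \<le> 0"
  proof (rule GL[OF dg, of 1])
    fix t :: real assume t: "0 < t" "t < 1"
    define G where "G \<zeta> = of_real t * \<phi> (x * \<zeta>) + of_real (1 - t) * \<phi> \<zeta>" for \<zeta>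
    have Gin: "G \<zeta> \<in> \<phi> ` ball 0 1" if "\<zeta> \<in> ball 0 1" for \<zeta>
    proof -
      have xzeta: "x * \<zeta> \<in> ball 0 1"
      proof -
        have "norm (x * \<zeta>) \<le> norm \<zeta>" using x by (simp add: norm_mult mult_left_le_one_le)
        then show ?thesis using that by simp
      qed
      have cvd: "\<forall>x\<in>\<phi> ` ball 0 1. \<forall>y\<in>\<phi> ` ball 0 1. \<forall>u\<ge>0. \<forall>v\<ge>0. u + v = 1 \<longrightarrow> u *\<^sub>R x + v *\<^sub>R y \<in> \<phi> ` ball 0 1"
        using cv by (simp add: convex_def)
      have "t *\<^sub>R \<phi> (x * \<zeta>) + (1 - t) *\<^sub>R \<phi> \<zeta> \<in> \<phi> ` ball 0 1"
        using cvd[rule_format, of "\<phi> (x * \<zeta>)" "\<phi> \<zeta>" t "1 - t"] xzeta that t by auto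
      then show ?thesis by (simp add: G_def scaleR_conv_of_real)
    qed
    define om where "om \<zeta> = g (G \<zeta>)" for \<zeta>
    have Gh: "G holomorphic_on ball 0 1"
    proof -
      have "(\<lambda>\<zeta>. \<phi> (x * \<zeta>)) holomorphic_on ball 0 1"
      proof -
        have im: "(\<lambda>\<zeta>. x * \<zeta>) ` ball 0 1 \<subseteq> ball 0 1"
        proof
          fix y assume "y \<in> (\<lambda>\<zeta>. x * \<zeta>) ` ball 0 1"
          then obtain \<zeta> where "\<zeta> \<in> ball 0 1" "y = x * \<zeta>" by blast
          moreover have "norm (x * \<zeta>) \<le> norm \<zeta>" using x by (simp add: norm_mult mult_left_le_one_le)
          ultimately show "y \<in> ball 0 1" by simp
        qed
        have "(\<phi> \<circ> (\<lambda>\<zeta>. x * \<zeta>)) holomorphic_on ball 0 1"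
          by (rule holomorphic_on_compose_gen[OF _ ph im]) (intro holomorphic_intros)
        then show ?thesis by (simp add: o_def)
      qed
      then show ?thesis unfolding G_def[abs_def] by (intro holomorphic_intros ph)
    qed
    have omh: "om holomorphic_on ball 0 1"
    proof -
      have "(g \<circ> G) holomorphic_on ball 0 1"
        by (rule holomorphic_on_compose_gen[OF Gh gh]) (use Gin in auto)
      moreover have "om = g \<circ> G" by (simp add: om_def fun_eq_iff)
      ultimately show ?thesis by simp
    qed
    have om0: "om 0 = 0"
    proof -
      have "G 0 = \<phi> 0" by (simp add: G_def phi0)
      then show ?thesis using gi[of 0] by (simp add: om_def)
    qed
    have omlt: "norm (om \<zeta>) < 1" if zl: "norm \<zeta> < 1" for \<zeta>
    proof -
      have "\<zeta> \<in> ball 0 1" using zl by simp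
      then have "G \<zeta> \<in> \<phi> ` ball 0 1" by (rule Gin)
      then obtain u where u: "u \<in> ball 0 1" "G \<zeta> = \<phi> u" by blast
      then show ?thesis using gi[OF u(1)] by (simp add: om_def)
    qed
    have "norm (om z) \<le> norm z" using Schwarz_Lemma(1)[OF omh om0 omlt] z by simp
    moreover have "a + of_real t * b = G z" by (simp add: a_def b_def G_def algebra_simps)
    ultimately have ng: "norm (g (a + of_real t * b)) \<le> norm z" by (simp add: om_def)
    have ga: "g a = z" using gi[OF z] by (simp add: a_def)
    have "Re (cnj z * g (a + of_real t * b)) \<le> norm (cnj z * g (a + of_real t * b))"
      by (rule complex_Re_le_cmod)
    also have "\<dots> \<le> norm z * norm z" using ng by (simp add: norm_mult mult_left_mono)
    finally have "Re (cnj z * g (a + of_real t * b)) \<le> norm z * norm z" .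
    moreover have "Re (cnj z * z) = norm z * norm z"
      by (simp add: complex_norm_square[symmetric] power2_eq_square mult.commute)
    ultimately show "Re (cnj z * (g (a + of_real t * b) - g a)) \<le> 0 * t"
      by (simp add: ga algebra_simps)
  qed simp
  then show ?thesis by (simp add: dgv b_def)
qed

lemma F2:
  assumes conv: "convex_mapping \<phi>" and phi0: "\<phi> 0 = 0" and z: "z \<in> ball 0 1"
  shows "Re (1 + z * deriv (deriv \<phi>) z / deriv \<phi> z) \<ge> 0"
proof (cases "z = 0")
  case True then show ?thesis by simp
next
  case False
  have ph: "\<phi> holomorphic_on ball 0 1" and inj: "inj_on \<phi> (ball 0 1)"
    using conv by (auto simp: convex_mapping_def)
  define d where "d = deriv \<phi> z"
  have dnz: "d \<noteq> 0" unfolding d_def by (rule holomorphic_injective_imp_regular[OF ph open_ball inj z])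
  have dph: "(\<phi> has_field_derivative deriv \<phi> u) (at u)" if "u \<in> ball 0 1" for u
    by (rule holomorphic_derivI[OF ph open_ball that])
  have ph': "deriv \<phi> holomorphic_on ball 0 1" by (rule holomorphic_deriv[OF ph open_ball])
  have ddph: "(deriv \<phi> has_field_derivative deriv (deriv \<phi>) u) (at u)" if "u \<in> ball 0 1" for u
    by (rule holomorphic_derivI[OF ph' open_ball that])
  have nz: "0 < norm z" "norm z < 1" using False z by auto
  define \<rho> where "\<rho> = - ln (norm z)"
  have \<rho>: "\<rho> > 0" using nz by (simp add: \<rho>_def)
  define B where "B = ball (0::complex) \<rho>"
  have inB: "exp \<zeta> * z \<in> ball 0 1" if "\<zeta> \<in> B" for \<zeta>
  proof -
    have "Re \<zeta> < \<rho>" using that complex_Re_le_cmod[of \<zeta>] by (auto simp: B_def)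
    then have "exp (Re \<zeta>) < exp \<rho>" by simp
    also have "exp \<rho> = 1 / norm z" using nz by (simp add: \<rho>_def exp_minus inverse_eq_divide)
    finally have "exp (Re \<zeta>) * norm z < 1" using nz by (simp add: field_simps)
    then show ?thesis by (simp add: norm_mult)
  qed
  define P where "P \<zeta> = (\<phi> z - \<phi> (exp \<zeta> * z)) / (z * d) + \<zeta>" for \<zeta>
  define P1 where "P1 \<zeta> = 1 - deriv \<phi> (exp \<zeta> * z) * exp \<zeta> / d" for \<zeta>
  have dP: "(P has_field_derivative P1 \<zeta>) (at \<zeta>)" if "\<zeta> \<in> B" for \<zeta>
  proof -
    have de: "((\<lambda>\<zeta>. exp \<zeta> * z) has_field_derivative exp \<zeta> * z) (at \<zeta>)"
      by (auto intro!: derivative_eq_intros)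
    have "((\<lambda>\<zeta>. \<phi> (exp \<zeta> * z)) has_field_derivative deriv \<phi> (exp \<zeta> * z) * (exp \<zeta> * z)) (at \<zeta>)"
      using DERIV_chain2[OF dph[OF inB[OF that]] de] .
    then have "(P has_field_derivative (0 - deriv \<phi> (exp \<zeta> * z) * (exp \<zeta> * z)) / (z * d) + 1) (at \<zeta>)"
      unfolding P_def[abs_def] using False dnz by (auto intro!: derivative_eq_intros)
    moreover have "(0 - deriv \<phi> (exp \<zeta> * z) * (exp \<zeta> * z)) / (z * d) + 1 = P1 \<zeta>"
      using False dnz by (simp add: P1_def field_simps)
    ultimately show ?thesis by simp
  qed
  define D2 where "D2 = - (deriv (deriv \<phi>) z * z + d) / d"
  have dP1: "(P1 has_field_derivative D2) (at 0)"
  proof -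
    have de: "((\<lambda>\<zeta>. exp \<zeta> * z) has_field_derivative exp 0 * z) (at 0)"
      by (auto intro!: derivative_eq_intros)
    have z1: "exp 0 * z \<in> ball 0 1" using z by simp
    have "((\<lambda>\<zeta>. deriv \<phi> (exp \<zeta> * z)) has_field_derivative deriv (deriv \<phi>) (exp 0 * z) * (exp 0 * z)) (at 0)"
      using DERIV_chain2[OF ddph[OF z1] de] .
    then have "((\<lambda>\<zeta>. deriv \<phi> (exp \<zeta> * z)) has_field_derivative deriv (deriv \<phi>) z * z) (at 0)" by simp
    then have "(P1 has_field_derivative 0 - (deriv (deriv \<phi>) z * z * exp 0 + deriv \<phi> (exp 0 * z) * exp 0) / d) (at 0)"
      unfolding P1_def[abs_def] using dnz by (auto intro!: derivative_eq_intros)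
    then show ?thesis by (rule DERIV_cong) (simp add: D2_def d_def minus_divide_left)
  qed
  have P0: "P 0 = 0" by (simp add: P_def)
  have P10: "P1 0 = 0" using dnz by (simp add: P1_def d_def)
  have oB: "open B" by (simp add: B_def)
  have PB: "P holomorphic_on B"
    unfolding holomorphic_on_open[OF oB] using dP by blast
  have B0: "0 \<in> interior B" using \<rho> by (simp add: B_def)
  define Q where "Q \<zeta> = (if \<zeta> = 0 then deriv P 0 else (P \<zeta> - P 0) / (\<zeta> - 0))" for \<zeta>
  have QB: "Q holomorphic_on B" unfolding Q_def[abs_def] by (rule pole_lemma[OF PB B0])
  have dP0: "deriv P 0 = 0" using DERIV_imp_deriv[OF dP[of 0]] P10 \<rho> by (simp add: B_def)
  have Q0: "Q 0 = 0" by (simp add: Q_def dP0)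
  have PQ: "P \<zeta> = \<zeta> * Q \<zeta>" for \<zeta> by (cases "\<zeta> = 0") (simp_all add: Q_def P0 Q0)
  have Q': "deriv Q holomorphic_on B" by (rule holomorphic_deriv[OF QB oB])
  have dQ: "(Q has_field_derivative deriv Q \<zeta>) (at \<zeta>)" if "\<zeta> \<in> B" for \<zeta>
    by (rule holomorphic_derivI[OF QB oB that])
  have ddQ: "(deriv Q has_field_derivative deriv (deriv Q) \<zeta>) (at \<zeta>)" if "\<zeta> \<in> B" for \<zeta>
    by (rule holomorphic_derivI[OF Q' oB that])
  have P1eq: "P1 \<zeta> = Q \<zeta> + \<zeta> * deriv Q \<zeta>" if "\<zeta> \<in> B" for \<zeta>
  proof -
    have "((\<lambda>\<zeta>. \<zeta> * Q \<zeta>) has_field_derivative 1 * Q \<zeta> + deriv Q \<zeta> * \<zeta>) (at \<zeta>)"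
      by (rule DERIV_mult[OF DERIV_ident dQ[OF that]])
    moreover have "(\<lambda>\<zeta>. \<zeta> * Q \<zeta>) = P" using PQ by (simp add: fun_eq_iff)
    ultimately have "(P has_field_derivative Q \<zeta> + \<zeta> * deriv Q \<zeta>) (at \<zeta>)"
      by (simp add: mult.commute)
    then show ?thesis using DERIV_unique dP[OF that] by blast
  qed
  have B0': "0 \<in> B" using \<rho> by (simp add: B_def)
  have h2: "((\<lambda>\<zeta>. \<zeta> * deriv Q \<zeta>) has_field_derivative 1 * deriv Q 0 + deriv (deriv Q) 0 * 0) (at 0)"
    by (rule DERIV_mult[OF DERIV_ident ddQ[OF B0']])
  have "((\<lambda>\<zeta>. Q \<zeta> + \<zeta> * deriv Q \<zeta>) has_field_derivative deriv Q 0 + (1 * deriv Q 0 + deriv (deriv Q) 0 * 0)) (at 0)"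
    by (rule DERIV_add[OF dQ[OF B0'] h2])
  then have "(P1 has_field_derivative deriv Q 0 + (1 * deriv Q 0 + deriv (deriv Q) 0 * 0)) (at 0)"
    by (rule has_field_derivative_transform_within_open[OF _ oB]) (use \<rho> P1eq in \<open>auto simp: B_def\<close>)
  then have D2Q: "D2 = 2 * deriv Q 0" using DERIV_unique[OF dP1] by simp
  have ReQ: "Re (- \<i> * deriv Q 0 * \<i>) \<le> 0"
  proof (rule GL[OF dQ[of 0] _, of \<rho>])
    show "0 \<in> B" using \<rho> by (simp add: B_def)
    show "0 < \<rho>" by (rule \<rho>)
    fix t :: real assume t: "0 < t" "t < \<rho>"
    define x where "x = exp (\<i> * of_real t)"
    have nx: "norm x \<le> 1" by (simp add: x_def)
    have f1: "Re (cnj z * (\<phi> (x * z) - \<phi> z) / d) \<le> 0"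
      unfolding d_def by (rule F1[OF conv phi0 z nx])
    define Y where "Y = cnj z * (\<phi> (x * z) - \<phi> z) / d"
    have cz: "cnj z \<noteq> 0" using False by simp
    have "(\<phi> z - \<phi> (x * z)) / (z * d) = - Y / (z * cnj z)"
      using False dnz cz by (simp add: Y_def field_simps)
    also have "z * cnj z = of_real ((norm z)^2)" by (rule complex_norm_square[symmetric])
    finally have "Re ((\<phi> z - \<phi> (x * z)) / (z * d)) = Re (- Y / of_real ((norm z)^2))" by simp
    also have "\<dots> = - Re Y / (norm z)^2" by (simp only: Re_divide_of_real uminus_complex.sel)
    also have "\<dots> \<ge> 0" using f1 nz by (intro divide_nonneg_pos) (simp_all add: Y_def)
    finally have rp: "Re ((\<phi> z - \<phi> (x * z)) / (z * d)) \<ge> 0" .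
    have "P (\<i> * of_real t) = (\<phi> z - \<phi> (x * z)) / (z * d) + \<i> * of_real t"
      by (simp add: P_def x_def)
    then have "Re (P (\<i> * of_real t)) \<ge> 0" using rp by simp
    moreover have "P (\<i> * of_real t) = \<i> * of_real t * Q (\<i> * of_real t)" by (rule PQ)
    ultimately have "- t * Im (Q (\<i> * of_real t)) \<ge> 0" by simp
    then have "Im (Q (\<i> * of_real t)) \<le> 0" using t by (simp add: mult_le_0_iff)
    then show "Re (- \<i> * (Q (0 + of_real t * \<i>) - Q 0)) \<le> 0 * t"
      by (simp add: Q0 mult.commute)
  qed
  then have "Re (deriv Q 0) \<le> 0" by simp
  then have "Re D2 \<le> 0" using D2Q by simp
  moreover have "D2 = - (1 + z * deriv (deriv \<phi>) z / deriv \<phi> z)"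
    using dnz by (simp add: D2_def d_def field_simps)
  ultimately show ?thesis by simp
qed

definition qf :: "(complex \<Rightarrow> complex) \<Rightarrow> complex \<Rightarrow> complex" where
  "qf \<phi> z = (if z = 0 then 1 else \<phi> z / z)"

definition pf :: "(complex \<Rightarrow> complex) \<Rightarrow> complex \<Rightarrow> complex" where
  "pf \<phi> z = deriv \<phi> z / qf \<phi> z"

lemma qf_basic:
  assumes conv: "convex_mapping \<phi>" and phi0: "\<phi> 0 = 0" and d0: "deriv \<phi> 0 = 1"
  shows "qf \<phi> holomorphic_on ball 0 1" "\<And>z. z \<in> ball 0 1 \<Longrightarrow> qf \<phi> z \<noteq> 0" "qf \<phi> 0 = 1"
    "\<And>z. z \<in> ball 0 1 \<Longrightarrow> deriv \<phi> z \<noteq> 0"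
    "pf \<phi> holomorphic_on ball 0 1" "\<And>z. z \<in> ball 0 1 \<Longrightarrow> pf \<phi> z \<noteq> 0" "pf \<phi> 0 = 1"
proof -
  have ph: "\<phi> holomorphic_on ball 0 1" and inj: "inj_on \<phi> (ball 0 1)"
    using conv by (auto simp: convex_mapping_def)
  have "(\<lambda>z. if z = 0 then deriv \<phi> 0 else (\<phi> z - \<phi> 0) / (z - 0)) holomorphic_on ball 0 1"
    by (rule pole_lemma[OF ph]) simp
  moreover have "(\<lambda>z. if z = 0 then deriv \<phi> 0 else (\<phi> z - \<phi> 0) / (z - 0)) = qf \<phi>"
    by (simp add: fun_eq_iff qf_def d0 phi0)
  ultimately show qh: "qf \<phi> holomorphic_on ball 0 1" by simp
  show qnz: "qf \<phi> z \<noteq> 0" if "z \<in> ball 0 1" for z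
  proof (cases "z = 0")
    case True then show ?thesis by (simp add: qf_def)
  next
    case False
    have "\<phi> z \<noteq> \<phi> 0" using inj False that by (meson centre_in_ball inj_onD zero_less_one)
    then show ?thesis using False by (simp add: qf_def phi0)
  qed
  show "qf \<phi> 0 = 1" by (simp add: qf_def)
  show dnz: "deriv \<phi> z \<noteq> 0" if "z \<in> ball 0 1" for z
    by (rule holomorphic_injective_imp_regular[OF ph open_ball inj that])
  show "pf \<phi> holomorphic_on ball 0 1"
    unfolding pf_def[abs_def] using qnz by (intro holomorphic_intros holomorphic_deriv ph qh) auto
  show "pf \<phi> z \<noteq> 0" if "z \<in> ball 0 1" for z using qnz[OF that] dnz[OF that] by (simp add: pf_def)
  show "pf \<phi> 0 = 1" by (simp add: pf_def qf_def d0)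
qed

lemma F2_strict:
  assumes conv: "convex_mapping \<phi>" and phi0: "\<phi> 0 = 0" and d0: "deriv \<phi> 0 = 1" and z: "z \<in> ball 0 1"
  shows "Re (1 + z * deriv (deriv \<phi>) z / deriv \<phi> z) > 0"
proof -
  have ph: "\<phi> holomorphic_on ball 0 1" using conv by (auto simp: convex_mapping_def)
  define X where "X u = 1 + u * deriv (deriv \<phi>) u / deriv \<phi> u" for u
  have Xh: "X holomorphic_on ball 0 1"
    unfolding X_def[abs_def] using qf_basic(4)[OF conv phi0 d0]
    by (intro holomorphic_intros holomorphic_deriv ph open_ball) auto
  define G where "G u = exp (- X u)" for u
  have Gh: "G holomorphic_on ball 0 1" unfolding G_def[abs_def] by (intro holomorphic_intros Xh)
  have ge: "Re (X u) \<ge> 0" if "u \<in> ball 0 1" for u unfolding X_def by (rule F2[OF conv phi0 that])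
  have nG: "norm (G u) = exp (- Re (X u))" for u by (simp add: G_def)
  show ?thesis
  proof (rule ccontr)
    assume "\<not> ?thesis"
    then have X0: "Re (X z) = 0" using ge[OF z] by (simp add: X_def)
    have "norm (G u) \<le> norm (G z)" if "u \<in> ball 0 1" for u
      using ge[OF that] X0 by (simp add: nG)
    then have "G constant_on ball 0 1"
      using maximum_modulus_principle[OF Gh open_ball connected_ball open_ball subset_refl z] by blast
    then have "G 0 = G z" by (metis (no_types, lifting) centre_in_ball constant_on_def z zero_less_one)
    then have "norm (G 0) = norm (G z)" by simp
    moreover have "X 0 = 1" by (simp add: X_def)
    ultimately show False using X0 by (simp add: nG)
  qed
qed

lemma half_circle:
  assumes "P \<noteq> 0" "norm (1 - 1 / P) = 1"
  shows "Re P = 1/2"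
proof -
  have "norm (P - 1) = norm P"
  proof -
    have "1 - 1 / P = (P - 1) / P" using assms(1) by (simp add: field_simps)
    then show ?thesis using assms by (simp add: norm_divide)
  qed
  then have "(norm (P - 1))^2 = (norm P)^2" by simp
  then have "(Re P - 1)^2 + (Im P)^2 = (Re P)^2 + (Im P)^2" by (simp only: cmod_power2) simp
  then show ?thesis by (simp add: power2_eq_square algebra_simps)
qed

lemma jack_P':
  assumes Ph: "P holomorphic_on ball 0 1" and P0: "P 0 = 1"
    and Pnz: "\<And>z. z \<in> ball 0 1 \<Longrightarrow> P z \<noteq> 0"
    and z1: "z1 \<in> ball 0 1" "Re (P z1) \<le> 1/2"
  obtains z0 k where "z0 \<in> ball 0 1" "z0 \<noteq> 0" "k \<ge> 1" "Re (P z0) = 1/2"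
    "z0 * deriv P z0 / P z0 = of_real k * (P z0 - 1)"
proof -
  obtain z0 k where z0: "z0 \<in> ball 0 1" "z0 \<noteq> 0" "k \<ge> 1" "norm (1 - 1 / P z0) = 1"
    "z0 * deriv P z0 / P z0 = of_real k * (1 - 1 / P z0) * P z0"
    using jack_P[OF Ph P0 Pnz z1] by blast
  have Pn: "P z0 \<noteq> 0" using Pnz z0 by auto
  have "of_real k * (1 - 1 / P z0) * P z0 = of_real k * (P z0 - 1)"
    using Pn by (simp add: algebra_simps)
  then show ?thesis using that[OF z0(1-3) half_circle[OF Pn z0(4)]] z0(5) by simp
qed

lemma Re_pf:
  assumes conv: "convex_mapping \<phi>" and phi0: "\<phi> 0 = 0" and d0: "deriv \<phi> 0 = 1" and z: "z \<in> ball 0 1"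
  shows "Re (pf \<phi> z) > 1/2"
proof (rule ccontr)
  assume "\<not> ?thesis"
  then have z1: "Re (pf \<phi> z) \<le> 1/2" by simp
  note B = qf_basic[OF conv phi0 d0]
  obtain z0 k where z0: "z0 \<in> ball 0 1" "z0 \<noteq> 0" "k \<ge> 1" "Re (pf \<phi> z0) = 1/2"
    "z0 * deriv (pf \<phi>) z0 / pf \<phi> z0 = of_real k * (pf \<phi> z0 - 1)"
    using jack_P'[OF B(5) B(7) B(6) z z1] by blast
  have ph: "\<phi> holomorphic_on ball 0 1" and inj: "inj_on \<phi> (ball 0 1)"
    using conv by (auto simp: convex_mapping_def)
  have phnz: "\<phi> z0 \<noteq> 0"
    using inj z0 phi0 by (metis centre_in_ball inj_onD zero_less_one)
  have dnz: "deriv \<phi> z0 \<noteq> 0" using B(4) z0 by auto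
  have dph: "(\<phi> has_field_derivative deriv \<phi> z0) (at z0)"
    by (rule holomorphic_derivI[OF ph open_ball z0(1)])
  have ph': "deriv \<phi> holomorphic_on ball 0 1" by (rule holomorphic_deriv[OF ph open_ball])
  have ddph: "(deriv \<phi> has_field_derivative deriv (deriv \<phi>) z0) (at z0)"
    by (rule holomorphic_derivI[OF ph' open_ball z0(1)])
  define E where "E = ((deriv \<phi> z0 + z0 * deriv (deriv \<phi>) z0) * \<phi> z0 - z0 * deriv \<phi> z0 * deriv \<phi> z0) / (\<phi> z0 * \<phi> z0)"
  have "((\<lambda>u. u * deriv \<phi> u / \<phi> u) has_field_derivative E) (at z0)"
    unfolding E_def using dph ddph phnz
    by (auto intro!: derivative_eq_intros simp: field_simps power2_eq_square)
  moreover have "open (ball 0 1 - {0::complex})" by auto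
  moreover have "z0 \<in> ball 0 1 - {0}" using z0 by auto
  moreover have "u * deriv \<phi> u / \<phi> u = pf \<phi> u" if "u \<in> ball 0 1 - {0}" for u
    using that by (simp add: pf_def qf_def)
  ultimately have "(pf \<phi> has_field_derivative E) (at z0)"
    by (rule has_field_derivative_transform_within_open)
  then have dp: "deriv (pf \<phi>) z0 = E" by (rule DERIV_imp_deriv)
  have pz0: "pf \<phi> z0 = z0 * deriv \<phi> z0 / \<phi> z0" using z0 by (simp add: pf_def qf_def)
  have "pf \<phi> z0 + z0 * deriv (pf \<phi>) z0 / pf \<phi> z0 = 1 + z0 * deriv (deriv \<phi>) z0 / deriv \<phi> z0"
    unfolding dp pz0 E_def using phnz dnz z0(2) by (simp add: field_simps)
  moreover have "Re (pf \<phi> z0 + z0 * deriv (pf \<phi>) z0 / pf \<phi> z0) = 1/2 + k * (1/2 - 1)"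
  proof -
    have "Re (pf \<phi> z0 + z0 * deriv (pf \<phi>) z0 / pf \<phi> z0) = Re (pf \<phi> z0) + k * (Re (pf \<phi> z0) - 1)"
      using z0(5) by simp
    then show ?thesis unfolding z0(4) .
  qed
  moreover have "1/2 + k * (1/2 - 1) \<le> 0" using z0(3) by simp
  ultimately show False using F2_strict[OF conv phi0 d0 z0(1)] by simp
qed

lemma Re_qf:
  assumes conv: "convex_mapping \<phi>" and phi0: "\<phi> 0 = 0" and d0: "deriv \<phi> 0 = 1" and z: "z \<in> ball 0 1"
  shows "Re (qf \<phi> z) > 1/2"
proof (rule ccontr)
  assume "\<not> ?thesis"
  then have z1: "Re (qf \<phi> z) \<le> 1/2" by simp
  note B = qf_basic[OF conv phi0 d0]
  obtain z0 k where z0: "z0 \<in> ball 0 1" "z0 \<noteq> 0" "k \<ge> 1" "Re (qf \<phi> z0) = 1/2"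
    "z0 * deriv (qf \<phi>) z0 / qf \<phi> z0 = of_real k * (qf \<phi> z0 - 1)"
    using jack_P'[OF B(1) B(3) B(2) z z1] by blast
  have ph: "\<phi> holomorphic_on ball 0 1" and inj: "inj_on \<phi> (ball 0 1)"
    using conv by (auto simp: convex_mapping_def)
  have phnz: "\<phi> z0 \<noteq> 0"
    using inj z0 phi0 by (metis centre_in_ball inj_onD zero_less_one)
  have dph: "(\<phi> has_field_derivative deriv \<phi> z0) (at z0)"
    by (rule holomorphic_derivI[OF ph open_ball z0(1)])
  define E where "E = (deriv \<phi> z0 * z0 - \<phi> z0) / (z0 * z0)"
  have "((\<lambda>u. \<phi> u / u) has_field_derivative E) (at z0)"
    unfolding E_def using dph z0(2)
    by (auto intro!: derivative_eq_intros simp: field_simps power2_eq_square)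
  moreover have "open (ball 0 1 - {0::complex})" by auto
  moreover have "z0 \<in> ball 0 1 - {0}" using z0 by auto
  moreover have "\<phi> u / u = qf \<phi> u" if "u \<in> ball 0 1 - {0}" for u
    using that by (simp add: qf_def)
  ultimately have "(qf \<phi> has_field_derivative E) (at z0)"
    by (rule has_field_derivative_transform_within_open)
  then have dq: "deriv (qf \<phi>) z0 = E" by (rule DERIV_imp_deriv)
  have "pf \<phi> z0 = 1 + z0 * deriv (qf \<phi>) z0 / qf \<phi> z0"
    unfolding dq E_def using phnz z0(2) by (simp add: pf_def qf_def field_simps)
  then have "Re (pf \<phi> z0) = 1 + k * (Re (qf \<phi> z0) - 1)"
    using z0(5) by simp
  then have "Re (pf \<phi> z0) = 1 + k * (1/2 - 1)" unfolding z0(4) .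
  moreover have "1 + k * (1/2 - 1) \<le> 1/2" using z0(3) by simp
  ultimately show False using Re_pf[OF conv phi0 d0 z0(1)] by simp
qed




lemma line_primitive:
  assumes fh: "f holomorphic_on ball 0 1" and z: "z \<in> ball 0 1"
  shows "((\<lambda>x. contour_integral (linepath 0 x) f) has_field_derivative f z) (at z)"
proof (rule triangle_contour_integrals_starlike_primitive[of "ball 0 1"])
  show "continuous_on (ball 0 1) f" using fh by (rule holomorphic_on_imp_continuous_on)
  show "(0::complex) \<in> ball 0 1" "open (ball (0::complex) 1)" "z \<in> ball 0 1" using z by auto
  show "closed_segment 0 y \<subseteq> ball 0 1" if "y \<in> ball 0 1" for y :: complex
    using that by (intro closed_segment_subset) (auto simp: convex_ball)
  fix b c assume bc: "closed_segment b c \<subseteq> ball (0::complex) 1"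
  have "b \<in> ball 0 1" "c \<in> ball 0 1" using bc by auto
  then have "convex hull {0, b, c} \<subseteq> ball 0 1"
    by (intro hull_minimal) auto
  then have "f holomorphic_on convex hull {0, b, c}" by (rule holomorphic_on_subset[OF fh])
  then have "(f has_contour_integral 0) (linepath 0 b +++ linepath b c +++ linepath c 0)"
    by (rule Cauchy_theorem_triangle)
  then show "contour_integral (linepath 0 b) f + contour_integral (linepath b c) f + contour_integral (linepath c 0) f = 0"
    by (rule has_chain_integral_chain_integral3)
qed

lemma L_exists:
  assumes conv: "convex_mapping \<phi>" and phi0: "\<phi> 0 = 0" and d0: "deriv \<phi> 0 = 1"
  shows "\<exists>L. log_quot_branch \<phi> L"
proof -
  note B = qf_basic[OF conv phi0 d0]
  obtain g where gh: "g holomorphic_on ball 0 1" and ge: "\<forall>z\<in>ball 0 1. qf \<phi> z = exp (g z)"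
    using contractible_imp_holomorphic_log[OF B(1) convex_imp_contractible[OF convex_ball] B(2)] by metis
  define L where "L z = g z - g 0" for z
  have "exp (g 0) = 1" using ge B(3) by (metis centre_in_ball zero_less_one)
  then have eL: "exp (L z) = qf \<phi> z" if "z \<in> ball 0 1" for z
    using ge that by (simp add: L_def exp_diff)
  have "log_quot_branch \<phi> L"
    unfolding log_quot_branch_def
  proof (intro conjI ballI)
    show "L holomorphic_on ball 0 1" unfolding L_def[abs_def] by (intro holomorphic_intros gh)
    show "L 0 = 0" by (simp add: L_def)
    fix z :: complex assume "z \<in> ball 0 1 - {0}"
    then show "exp (L z) = \<phi> z / z" using eL[of z] by (simp add: qf_def)
  qed
  then show ?thesis by blast
qed

lemma L_props:
  assumes conv: "convex_mapping \<phi>" and phi0: "\<phi> 0 = 0" and d0: "deriv \<phi> 0 = 1"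
    and LB: "log_quot_branch \<phi> L"
  shows "\<And>z. z \<in> ball 0 1 \<Longrightarrow> exp (L z) = qf \<phi> z"
    and "\<And>z. z \<in> ball 0 1 \<Longrightarrow> \<bar>Im (L z)\<bar> < pi / 2"
    and "\<And>z. z \<in> ball 0 1 \<Longrightarrow> z \<noteq> 0 \<Longrightarrow> z * deriv L z = pf \<phi> z - 1"
proof -
  note B = qf_basic[OF conv phi0 d0]
  have Lh: "L holomorphic_on ball 0 1" and L0: "L 0 = 0" and Le: "\<forall>z\<in>ball 0 1 - {0}. exp (L z) = \<phi> z / z"
    using LB by (auto simp: log_quot_branch_def)
  show eL: "exp (L z) = qf \<phi> z" if "z \<in> ball 0 1" for z
    using Le that by (cases "z = 0") (auto simp: qf_def L0)
  have Rpos: "Re (exp (L z)) > 0" if "z \<in> ball 0 1" for z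
    using Re_qf[OF conv phi0 d0 that] eL[OF that] by simp
  have cosp: "cos (Im (L z)) > 0" if "z \<in> ball 0 1" for z
    using Rpos[OF that] by (simp add: Re_exp zero_less_mult_iff)
  show "\<bar>Im (L z)\<bar> < pi / 2" if z: "z \<in> ball 0 1" for z
  proof (rule ccontr)
    assume "\<not> ?thesis"
    define f where "f t = Im (L (of_real t * z))" for t :: real
    have segB: "of_real t * z \<in> ball 0 1" if "t \<in> {0..1}" for t
    proof -
      have "norm (of_real t * z) \<le> norm z" using that by (simp add: norm_mult mult_left_le_one_le)
      then show ?thesis using z by simp
    qed
    have cf: "continuous_on {0..1} f"
    proof -
      have "continuous_on {0..1} (\<lambda>t::real. of_real t * z)" by (intro continuous_intros)
      moreover have "continuous_on ((\<lambda>t::real. of_real t * z) ` {0..1}) L"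
        by (rule continuous_on_subset[OF holomorphic_on_imp_continuous_on[OF Lh]]) (use segB in auto)
      ultimately have "continuous_on {0..1} (L \<circ> (\<lambda>t::real. of_real t * z))" by (rule continuous_on_compose)
      then show ?thesis unfolding f_def o_def by (intro continuous_intros)
    qed
    have f0: "f 0 = 0" by (simp add: f_def L0)
    have f1: "f 1 = Im (L z)" by (simp add: f_def)
    obtain t where t: "t \<in> {0..1}" "f t = pi / 2 \<or> f t = - (pi / 2)"
    proof (cases "Im (L z) \<ge> pi / 2")
      case True
      obtain t where "0 \<le> t" "t \<le> 1" "f t = pi / 2"
        using IVT'[of f 0 "pi/2" 1] cf f0 f1 True by auto
      then show ?thesis using that[of t] by auto
    next
      case False
      then have "Im (L z) \<le> - (pi / 2)" using \<open>\<not> \<bar>Im (L z)\<bar> < pi / 2\<close> by linarith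
      then obtain t where "0 \<le> t" "t \<le> 1" "f t = - (pi / 2)"
        using IVT2'[of f 1 "- (pi/2)" 0] cf f0 f1 by auto
      then show ?thesis using that[of t] by auto
    qed
    have "cos (f t) = 0"
      using t(2) by (metis cos_minus cos_pi_half)
    then show False using cosp[OF segB[OF t(1)]] by (simp add: f_def)
  qed
  show "z * deriv L z = pf \<phi> z - 1" if z: "z \<in> ball 0 1" "z \<noteq> 0" for z
  proof -
    have ph: "\<phi> holomorphic_on ball 0 1" and inj: "inj_on \<phi> (ball 0 1)"
      using conv by (auto simp: convex_mapping_def)
    have phnz: "\<phi> z \<noteq> 0"
      using inj z phi0 by (metis centre_in_ball inj_onD zero_less_one)
    have dph: "(\<phi> has_field_derivative deriv \<phi> z) (at z)"
      by (rule holomorphic_derivI[OF ph open_ball z(1)])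
    define E where "E = (deriv \<phi> z * z - \<phi> z) / (z * z)"
    have "((\<lambda>u. \<phi> u / u) has_field_derivative E) (at z)"
      unfolding E_def using dph z(2)
      by (auto intro!: derivative_eq_intros simp: field_simps power2_eq_square)
    moreover have "open (ball 0 1 - {0::complex})" by auto
    moreover have "z \<in> ball 0 1 - {0}" using z by auto
    moreover have "\<phi> u / u = qf \<phi> u" if "u \<in> ball 0 1 - {0}" for u
      using that by (simp add: qf_def)
    ultimately have dq: "(qf \<phi> has_field_derivative E) (at z)"
      by (rule has_field_derivative_transform_within_open)
    have dL: "(L has_field_derivative deriv L z) (at z)" by (rule holomorphic_derivI[OF Lh open_ball z(1)])
    have "((\<lambda>u. exp (L u)) has_field_derivative exp (L z) * deriv L z) (at z)"
      using dL by (auto intro!: derivative_eq_intros)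
    then have "(qf \<phi> has_field_derivative exp (L z) * deriv L z) (at z)"
      by (rule has_field_derivative_transform_within_open[OF _ open_ball z(1)]) (use eL in auto)
    then have "E = exp (L z) * deriv L z" using DERIV_unique[OF dq] by blast
    then have "E = \<phi> z / z * deriv L z" using eL[OF z(1)] z(2) by (simp add: qf_def)
    then have dLz: "deriv L z = E * z / \<phi> z" using phnz z(2) by (simp add: field_simps)
    have "z * deriv L z = (deriv \<phi> z * z - \<phi> z) / \<phi> z"
      unfolding dLz E_def using z(2) phnz by (simp add: field_simps)
    moreover have "pf \<phi> z = z * deriv \<phi> z / \<phi> z" using z(2) by (simp add: pf_def qf_def)
    ultimately show ?thesis using phnz by (simp add: diff_divide_distrib mult.commute)
  qed
qed


lemma Re_pos_nz: "Re z > 0 \<Longrightarrow> z \<noteq> 0"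
  by auto

lemma arg_bound:
  fixes u :: complex
  assumes u: "norm u < 1"
  shows "Re (1 + u) > 0" "\<bar>Im (Ln (1 + u))\<bar> \<le> arcsin (norm u)"
proof -
  show Rp: "Re (1 + u) > 0"
    using complex_Re_le_cmod[of "-u"] u by simp
  define w where "w = 1 + u"
  have wnz: "w \<noteq> 0" unfolding w_def by (rule Re_pos_nz[OF Rp])
  define \<theta> where "\<theta> = Im (Ln w)"
  have th: "\<bar>\<theta>\<bar> < pi / 2" unfolding \<theta>_def using Re_Ln_pos_lt_imp Rp by (simp add: w_def)
  have "Im w = norm w * sin \<theta>"
  proof -
    have "Im (exp (Ln w)) = exp (Re (Ln w)) * sin \<theta>" by (simp add: Im_exp \<theta>_def)
    moreover have "norm (exp (Ln w)) = exp (Re (Ln w))" by simp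
    ultimately show ?thesis using wnz by simp
  qed
  then have sinth: "sin \<theta> = Im u / norm w" using wnz by (simp add: w_def field_simps)
  have key: "(Im u)^2 \<le> (norm u * norm w)^2"
  proof -
    have "(norm u * norm w)^2 - (Im u)^2 = (Re u + (norm u)^2)^2"
      unfolding power_mult_distrib w_def by (simp only: cmod_power2) (simp add: power2_eq_square algebra_simps)
    then show ?thesis by (metis diff_ge_0_iff_ge zero_le_power2)
  qed
  then have "\<bar>Im u\<bar> \<le> norm u * norm w"
    using power2_le_imp_le[of "\<bar>Im u\<bar>" "norm u * norm w"] by simp
  then have sb: "\<bar>sin \<theta>\<bar> \<le> norm u" using wnz by (simp add: sinth abs_div pos_divide_le_eq)
  have "\<theta> = arcsin (sin \<theta>)" using th by (intro arcsin_sin[symmetric]) auto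
  also have "\<bar>arcsin (sin \<theta>)\<bar> = arcsin \<bar>sin \<theta>\<bar>"
  proof (cases "sin \<theta> \<ge> 0")
    case True
    then have "arcsin (sin \<theta>) \<ge> 0" using arcsin_le_arcsin[of 0 "sin \<theta>"] by simp
    then show ?thesis using True by simp
  next
    case False
    then have "arcsin (sin \<theta>) \<le> 0" using arcsin_le_arcsin[of "sin \<theta>" 0] by simp
    moreover have "arcsin (- sin \<theta>) = - arcsin (sin \<theta>)" by (rule arcsin_minus) auto
    ultimately show ?thesis using False by simp
  qed
  also have "arcsin \<bar>sin \<theta>\<bar> \<le> arcsin (norm u)"
    using sb u by (intro arcsin_le_arcsin) auto
  finally show "\<bar>Im (Ln (1 + u))\<bar> \<le> arcsin (norm u)" by (simp add: \<theta>_def w_def)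
qed

lemma Re_ratio_pos:
  fixes u1 u2 X :: complex
  assumes u: "norm u1 < 1" "norm u2 < 1"
    and bnd: "\<bar>Im X\<bar> + arcsin (norm u1) + arcsin (norm u2) < pi / 2"
  shows "Re (exp X * (1 + u1) / (1 + u2)) > 0"
proof -
  note a1 = arg_bound[OF u(1)] and a2 = arg_bound[OF u(2)]
  have n1: "1 + u1 \<noteq> 0" by (rule Re_pos_nz[OF a1(1)])
  have n2: "1 + u2 \<noteq> 0" by (rule Re_pos_nz[OF a2(1)])
  define Y where "Y = X + Ln (1 + u1) - Ln (1 + u2)"
  have "exp Y = exp X * (1 + u1) / (1 + u2)"
    using n1 n2 by (simp add: Y_def exp_add exp_diff)
  moreover have "\<bar>Im Y\<bar> < pi / 2"
  proof -
    have "\<bar>Im Y\<bar> \<le> \<bar>Im X\<bar> + \<bar>Im (Ln (1 + u1))\<bar> + \<bar>Im (Ln (1 + u2))\<bar>"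
      by (simp add: Y_def abs_triangle_ineq4 order_trans[OF abs_triangle_ineq4])
    then show ?thesis using a1(2) a2(2) bnd by linarith
  qed
  then have "cos (Im Y) > 0" by (intro cos_gt_zero_pi) auto
  then have "Re (exp Y) > 0" by (simp add: Re_exp)
  ultimately show ?thesis by simp
qed

lemma x0_props: "0 < x0" "x0 \<le> 1" "x0 * pi + 2 * arcsin x0 = pi / 2"
proof -
  define f where "f x = x * pi + 2 * arcsin x" for x
  have mono: "f x < f y" if "0 \<le> x" "x < y" "y \<le> 1" for x y
  proof -
    have "arcsin x \<le> arcsin y" using that by (intro arcsin_le_arcsin) auto
    moreover have "x * pi < y * pi" using that by (simp add: mult_strict_right_mono)
    ultimately show ?thesis unfolding f_def by linarith
  qed
  have cf: "continuous_on {0..1} f"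
    unfolding f_def by (intro continuous_intros) auto
  obtain x where x: "0 \<le> x" "x \<le> 1" "f x = pi / 2"
    using IVT'[of f 0 "pi/2" 1] cf by (auto simp: f_def)
  have xpos: "0 < x" using x by (cases "x = 0") (auto simp: f_def)
  have P: "0 < x \<and> x \<le> 1 \<and> x * pi + 2 * arcsin x = pi / 2" using x xpos by (simp add: f_def)
  have uniq: "y = x" if "0 < y \<and> y \<le> 1 \<and> y * pi + 2 * arcsin y = pi / 2" for y
  proof (rule ccontr)
    assume "y \<noteq> x"
    then have "y < x \<or> x < y" by auto
    then show False using mono[of y x] mono[of x y] that x xpos by (auto simp: f_def)
  qed
  have "x0 = x" unfolding x0_def
    apply (rule the_equality)
     apply (rule P)
    apply (rule uniq)
    apply assumption
    done
  then show "0 < x0" "x0 \<le> 1" "x0 * pi + 2 * arcsin x0 = pi / 2" using P by auto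
qed

lemma x0_bound:
  assumes "0 \<le> a" "a < x0"
  shows "a * (pi / 2) + 2 * arcsin a < pi / 2"
proof -
  note X = x0_props
  have "arcsin a \<le> arcsin x0" using assms X by (intro arcsin_le_arcsin) auto
  moreover have "a * (pi / 2) \<le> a * pi" using assms by (simp add: mult_left_mono)
  moreover have "a * pi < x0 * pi" using assms by simp
  ultimately show ?thesis using X(3) by linarith
qed


theorem mainTheorem3:
  fixes h g H G :: "complex \<Rightarrow> complex" and \<alpha> :: real
  assumes h_an: "h holomorphic_on unit_disc" and g_an: "g holomorphic_on unit_disc"
    and sense: "\<forall>z\<in>unit_disc. norm (deriv g z) < norm (deriv h z)"
    and norm0: "h 0 = 0" "g 0 = 0" "deriv h 0 = 1" "deriv g 0 = 0"
    and conv: "convex_mapping (\<lambda>z. h z - g z)"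
    and alpha: "- x0 < \<alpha>" "\<alpha> < sqrt 2 / 2"
    and H_an: "H holomorphic_on unit_disc" and G_an: "G holomorphic_on unit_disc"
    and HG0: "H 0 = 0" "G 0 = 0"
    and HG_diff: "\<forall>z\<in>unit_disc. H z - G z = phi_alpha (\<lambda>z. h z - g z) \<alpha> z"
    and HG_dil: "\<forall>z\<in>unit_disc. deriv H z \<noteq> 0 \<and>
                   deriv G z / deriv H z = of_real \<alpha> * (deriv g z / deriv h z)"
  shows "SHCC H G"
proof -
  define \<phi> where "\<phi> = (\<lambda>z. h z - g z)"
  have conv': "convex_mapping \<phi>" using conv by (simp add: \<phi>_def)
  have phi0: "\<phi> 0 = 0" using norm0 by (simp add: \<phi>_def)
  have zB: "(0::complex) \<in> ball 0 1" by simp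
  have "(\<phi> has_field_derivative deriv h 0 - deriv g 0) (at 0)"
    unfolding \<phi>_def using holomorphic_derivI[OF h_an open_ball zB] holomorphic_derivI[OF g_an open_ball zB]
    by (auto intro!: derivative_eq_intros)
  then have d0: "deriv \<phi> 0 = 1" using norm0 by (simp add: DERIV_imp_deriv)
  define L where "L = (SOME L. log_quot_branch \<phi> L)"
  have LB: "log_quot_branch \<phi> L" unfolding L_def using L_exists[OF conv' phi0 d0] by (rule someI_ex)
  note LP = L_props[OF conv' phi0 d0 LB]
  have Lh: "L holomorphic_on ball 0 1" using LB by (auto simp: log_quot_branch_def)
  have pa: "phi_alpha (\<lambda>z. h z - g z) \<alpha> = (\<lambda>z. contour_integral (linepath 0 z) (\<lambda>\<zeta>. exp (of_real \<alpha> * L \<zeta>)))"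
    by (simp add: phi_alpha_def L_def \<phi>_def fun_eq_iff)
  define E where "E z = exp (of_real \<alpha> * L z)" for z
  have Eh: "E holomorphic_on ball 0 1" unfolding E_def[abs_def] by (intro holomorphic_intros Lh)
  have dpa: "(phi_alpha (\<lambda>z. h z - g z) \<alpha> has_field_derivative E z) (at z)" if "z \<in> ball 0 1" for z
    unfolding pa using line_primitive[OF Eh that] by (simp add: E_def[abs_def])
  define \<omega> where "\<omega> z = deriv g z / deriv h z" for z
  have hnz: "deriv h z \<noteq> 0" if "z \<in> ball 0 1" for z
    using sense that by force
  have om1: "norm (\<omega> z) < 1" if "z \<in> ball 0 1" for z
  proof -
    have "norm (deriv g z) < norm (deriv h z)" using sense that by blast
    moreover have "norm (deriv h z) > 0" using hnz[OF that] by simp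
    ultimately show ?thesis by (simp add: \<omega>_def norm_divide divide_less_eq_1_pos)
  qed
  have x0p: "0 < x0" "x0 \<le> 1" using x0_props by auto
  have sq: "sqrt 2 / 2 < (1::real)"
  proof -
    have "(sqrt 2)^2 < (2::real)^2" by simp
    then have "sqrt 2 < 2" by (rule power_less_imp_less_base) simp
    then show ?thesis by simp
  qed
  have aabs: "\<bar>\<alpha>\<bar> < 1" using alpha x0p sq by auto
  have HGd: "deriv H z - deriv G z = E z" if z: "z \<in> ball 0 1" for z
  proof -
    have "((\<lambda>z. H z - G z) has_field_derivative deriv H z - deriv G z) (at z)"
      using holomorphic_derivI[OF H_an open_ball z] holomorphic_derivI[OF G_an open_ball z]
      by (auto intro!: derivative_eq_intros)
    then have "(phi_alpha (\<lambda>z. h z - g z) \<alpha> has_field_derivative deriv H z - deriv G z) (at z)"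
      by (rule has_field_derivative_transform_within_open[OF _ open_ball z]) (use HG_diff in auto)
    then show ?thesis using DERIV_unique[OF _ dpa[OF z]] by blast
  qed
  have Gd: "deriv G z = of_real \<alpha> * \<omega> z * deriv H z" if z: "z \<in> ball 0 1" for z
  proof -
    have nz: "deriv H z \<noteq> 0" and q: "deriv G z / deriv H z = of_real \<alpha> * \<omega> z"
      using HG_dil z by (auto simp: \<omega>_def)
    have "deriv G z = (deriv G z / deriv H z) * deriv H z" using nz by simp
    then show ?thesis unfolding q .
  qed
  have aom: "norm (of_real \<alpha> * \<omega> z) < 1" if z: "z \<in> ball 0 1" for z
  proof -
    have "norm (of_real \<alpha> * \<omega> z) = \<bar>\<alpha>\<bar> * norm (\<omega> z)" by (simp add: norm_mult)
    also have "\<dots> \<le> 1 * norm (\<omega> z)" using aabs by (intro mult_right_mono) auto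
    also have "\<dots> < 1" using om1[OF z] by simp
    finally show ?thesis .
  qed
  have aom_le: "norm (of_real \<alpha> * \<omega> z) \<le> \<bar>\<alpha>\<bar>" if z: "z \<in> ball 0 1" for z
  proof -
    have "norm (of_real \<alpha> * \<omega> z) = \<bar>\<alpha>\<bar> * norm (\<omega> z)" by (simp add: norm_mult)
    also have "\<dots> \<le> \<bar>\<alpha>\<bar> * 1" using om1[OF z] by (intro mult_left_mono) auto
    finally show ?thesis by simp
  qed
  have Hd: "deriv H z = E z / (1 - of_real \<alpha> * \<omega> z)" if z: "z \<in> ball 0 1" for z
  proof -
    have nz: "1 - of_real \<alpha> * \<omega> z \<noteq> 0"
    proof
      assume "1 - of_real \<alpha> * \<omega> z = 0"
      then have "of_real \<alpha> * \<omega> z = 1" by simp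
      then show False using aom[OF z] by simp
    qed
    have "deriv H z * (1 - of_real \<alpha> * \<omega> z) = E z"
      using HGd[OF z] Gd[OF z] by (simp add: algebra_simps)
    then show ?thesis using nz by (simp add: field_simps)
  qed
  show ?thesis
    unfolding SHCC_def
  proof (intro allI impI)
    fix lam :: complex assume lam: "norm lam = 1"
    define f where "f z = H z + lam * G z" for z
    have fh: "f holomorphic_on ball 0 1" unfolding f_def[abs_def] by (intro holomorphic_intros H_an G_an)
    have df: "deriv f z = exp (of_real \<alpha> * L z) * (1 + lam * (of_real \<alpha> * \<omega> z)) / (1 + - (of_real \<alpha> * \<omega> z))"
      if z: "z \<in> ball 0 1" for z
    proof -
      have "(f has_field_derivative deriv H z + lam * deriv G z) (at z)"
        unfolding f_def[abs_def]
        using holomorphic_derivI[OF H_an open_ball z] holomorphic_derivI[OF G_an open_ball z]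
        by (auto intro!: derivative_eq_intros)
      then have "deriv f z = deriv H z + lam * deriv G z" by (rule DERIV_imp_deriv)
      also have "\<dots> = deriv H z * (1 + lam * (of_real \<alpha> * \<omega> z))" using Gd[OF z] by (simp add: algebra_simps)
      also have "\<dots> = exp (of_real \<alpha> * L z) * (1 + lam * (of_real \<alpha> * \<omega> z)) / (1 + - (of_real \<alpha> * \<omega> z))"
        using Hd[OF z] by (simp add: E_def)
      finally show ?thesis .
    qed
    have nu1: "norm (lam * (of_real \<alpha> * \<omega> z)) = norm (of_real \<alpha> * \<omega> z)" for z
      using lam by (simp add: norm_mult)
    show "close_to_convex f"
      unfolding close_to_convex_def
    proof (intro conjI)
      show "f holomorphic_on unit_disc" by (rule fh)
      show "\<exists>psi. convex_mapping psi \<and> (\<forall>z\<in>unit_disc. 0 < Re (deriv f z / deriv psi z))"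
      proof (cases "\<alpha> \<le> 0")
        case True
        have cid: "convex_mapping (\<lambda>z. z)"
          by (simp add: convex_mapping_def)
        have "0 < Re (deriv f z / deriv (\<lambda>z. z) z)" if z: "z \<in> ball 0 1" for z
        proof -
          have did: "deriv (\<lambda>z. z) z = 1" by (rule DERIV_imp_deriv[OF DERIV_ident])
          have ImX: "\<bar>Im (of_real \<alpha> * L z)\<bar> \<le> \<bar>\<alpha>\<bar> * (pi / 2)"
          proof -
            have "\<bar>Im (of_real \<alpha> * L z)\<bar> = \<bar>\<alpha>\<bar> * \<bar>Im (L z)\<bar>" by (simp add: abs_mult)
            also have "\<dots> \<le> \<bar>\<alpha>\<bar> * (pi / 2)" using LP(2)[OF z] by (intro mult_left_mono) auto
            finally show ?thesis .
          qed
          have m1: "-1 \<le> norm (of_real \<alpha> * \<omega> z)" by (rule order_trans[of _ 0]) simp_all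
          have as: "arcsin (norm (of_real \<alpha> * \<omega> z)) \<le> arcsin \<bar>\<alpha>\<bar>"
            using aom_le[OF z] aabs m1 by (intro arcsin_le_arcsin) auto
          have "\<bar>\<alpha>\<bar> * (pi / 2) + 2 * arcsin \<bar>\<alpha>\<bar> < pi / 2"
            using True alpha(1) by (intro x0_bound) auto
          then have bnd: "\<bar>Im (of_real \<alpha> * L z)\<bar> + arcsin (norm (lam * (of_real \<alpha> * \<omega> z))) + arcsin (norm (- (of_real \<alpha> * \<omega> z))) < pi / 2"
            using ImX as nu1[of z] by (simp only: norm_minus_cancel)
          have "0 < Re (exp (of_real \<alpha> * L z) * (1 + lam * (of_real \<alpha> * \<omega> z)) / (1 + - (of_real \<alpha> * \<omega> z)))"
            by (rule Re_ratio_pos[OF _ _ bnd]) (use aom[OF z] nu1[of z] in auto)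
          then show ?thesis using df[OF z] did by simp
        qed
        then show ?thesis using cid by blast
      next
        case False
        then have apos: "\<alpha> > 0" by simp
        define \<psi> where "\<psi> = phi_alpha (\<lambda>z. h z - g z) \<alpha>"
        define \<Lambda> where "\<Lambda> z = of_real \<alpha> * L z" for z
        have psih: "\<psi> holomorphic_on ball 0 1"
          unfolding holomorphic_on_open[OF open_ball] \<psi>_def using dpa by blast
        have Lamh: "\<Lambda> holomorphic_on ball 0 1" unfolding \<Lambda>_def[abs_def] by (intro holomorphic_intros Lh)
        have dpsi: "deriv \<psi> z = exp (\<Lambda> z)" if "z \<in> ball 0 1" for z
          unfolding \<psi>_def \<Lambda>_def using DERIV_imp_deriv[OF dpa[OF that]] by (simp add: E_def)
        have pos: "Re (1 + z * deriv \<Lambda> z) > 0" if z: "z \<in> ball 0 1" for z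
        proof -
          have "(\<Lambda> has_field_derivative of_real \<alpha> * deriv L z) (at z)"
            unfolding \<Lambda>_def[abs_def] using holomorphic_derivI[OF Lh open_ball z]
            by (auto intro!: derivative_eq_intros)
          then have dLam: "deriv \<Lambda> z = of_real \<alpha> * deriv L z" by (rule DERIV_imp_deriv)
          show ?thesis
          proof (cases "z = 0")
            case True then show ?thesis by simp
          next
            case False
            have "z * deriv \<Lambda> z = of_real \<alpha> * (z * deriv L z)" by (simp add: dLam)
            also have "\<dots> = of_real \<alpha> * (pf \<phi> z - 1)" by (simp only: LP(3)[OF z False])
            finally have eq: "z * deriv \<Lambda> z = of_real \<alpha> * (pf \<phi> z - 1)" .
            have r1: "Re (1 + z * deriv \<Lambda> z) = 1 + \<alpha> * (Re (pf \<phi> z) - 1)" unfolding eq by simp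
            have "Re (pf \<phi> z) > 1/2" by (rule Re_pf[OF conv' phi0 d0 z])
            then have "\<alpha> * (Re (pf \<phi> z) - 1) > \<alpha> * (1/2 - 1)"
              by (intro mult_strict_left_mono apos) simp
            moreover have "\<alpha> < 1" using aabs by simp
            moreover have "\<alpha> * (1/2 - 1) = - \<alpha> / 2" by simp
            ultimately show ?thesis unfolding r1 by linarith
          qed
        qed
        have cpsi: "convex_mapping \<psi>" by (rule convex_criterion[OF psih Lamh dpsi pos])
        have "0 < Re (deriv f z / deriv \<psi> z)" if z: "z \<in> ball 0 1" for z
        proof -
          have a1: "arcsin (norm (of_real \<alpha> * \<omega> z)) < pi / 4"
          proof -
            have "norm (of_real \<alpha> * \<omega> z) < sqrt 2 / 2"
              using aom_le[OF z] alpha(2) apos by simp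
            moreover have m1: "-1 \<le> norm (of_real \<alpha> * \<omega> z)" by (rule order_trans[of _ 0]) simp_all
            ultimately have "arcsin (norm (of_real \<alpha> * \<omega> z)) < arcsin (sqrt 2 / 2)"
              using sq by (intro arcsin_less_arcsin) auto
            also have "arcsin (sqrt 2 / 2) = pi / 4"
              using arcsin_sin[of "pi/4"] by (simp add: sin_45)
            finally show ?thesis .
          qed
          have bnd: "\<bar>Im 0\<bar> + arcsin (norm (lam * (of_real \<alpha> * \<omega> z))) + arcsin (norm (- (of_real \<alpha> * \<omega> z))) < pi / 2"
            using a1 nu1[of z] by (simp only: norm_minus_cancel) simp
          have "0 < Re (exp 0 * (1 + lam * (of_real \<alpha> * \<omega> z)) / (1 + - (of_real \<alpha> * \<omega> z)))"
            by (rule Re_ratio_pos[OF _ _ bnd]) (use aom[OF z] nu1[of z] in auto)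
          moreover have "deriv f z / deriv \<psi> z = exp 0 * (1 + lam * (of_real \<alpha> * \<omega> z)) / (1 + - (of_real \<alpha> * \<omega> z))"
            using df[OF z] dpsi[OF z] by (simp add: \<Lambda>_def)
          ultimately show ?thesis by simp
        qed
        then show ?thesis using cpsi by blast
      qed
    qed
  qed
qed


end
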